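(* Let $(M,\le)$ be a finite ordered monoid. If $M$ is a $T_q$ monoid for some $q>1$, or if $M$ is divided (as an ordered monoid) by one of $BA_2^+$, $U^+$, or a non-commutative group (with any stable order), then $N^1(M)=\Omega(n)$.
   Context: $M$ is a $T_q$ monoid if there exist idempotents $e,f\in M$ with $(ef)^qe=e$ and $(ef)^re\ne e$ for every positive integer $r$ not divisible by $q$. Syntactic ordered monoid of $L\subseteq\Sigma^*$: write $x\preceq_L y$ if for all $u,v$, $uyv\in L\Rightarrow uxv\in L$; $\Sigma^*/\equiv_L$ (with $x\equiv_L y$ iff $x\preceq_L y$ and $y\preceq_L x$) ordered by $[x]\le[y]$ iff $x\preceq_L y$. $BA_2^+$ is the syntactic ordered monoid of $(ab)^*\subseteq\{a,b\}^*$; $U^+$ is the syntactic ordered monoid of the complement in $\{a,b\}^*$ of $(a\cup b)^*aa(a\cup b)^*$. An ordered monoid $N$ divides $M$ if there is a surjective order-preserving monoid morphism from a submonoid of $M$ (restricted order) onto $N$. A finite ordered monoid has a partial order with $x\le y\Rightarrow zx\le zy,\ xz\le yz$. $N^1(f)$ is the non-deterministic communication complexity of $f:X\times Y\to\{0,1\}$; equivalently, up to an additive constant 2, $\log_2$ of the minimum number of rectangles $S\times T$ on which $f\equiv1$ covering $f^{-1}(1)$. For an order ideal $I$ ($y\in I, x\le y\Rightarrow x\in I$), $N^1(M,I)(n)$ is $N^1$ of the function where Alice receives $m_1,m_3,\dots,m_{2n-1}$, Bob receives $m_2,\dots,m_{2n}$, value $1$ iff $m_1\cdots m_{2n}\in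 I$; $N^1(M)=\max_I N^1(M,I)$. *)

theory Defs
  imports Main "HOL-Library.Landau_Symbols"
begin

record 'a omonoid =
  carrier :: "'a set"
  mult :: "'a \<Rightarrow> 'a \<Rightarrow> 'a"
  unit :: 'a
  le :: "'a \<Rightarrow> 'a \<Rightarrow> bool"

definition ordered_monoid :: "'a omonoid \<Rightarrow> bool" where
  "ordered_monoid M \<longleftrightarrow>
     unit M \<in> carrier M \<and>
     (\<forall>x\<in>carrier M. \<forall>y\<in>carrier M. mult M x y \<in> carrier M) \<and>
     (\<forall>x\<in>carrier M. \<forall>y\<in>carrier M. \<forall>z\<in>carrier M.
        mult M (mult M x y) z = mult M x (mult M y z)) \<and>
     (\<forall>x\<in>carrier M. mult M (unit M) x = x \<and> mult M x (unit M) = x) \<and>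
     (\<forall>x\<in>carrier M. le M x x) \<and>
     (\<forall>x\<in>carrier M. \<forall>y\<in>carrier M. le M x y \<and> le M y x \<longrightarrow> x = y) \<and>
     (\<forall>x\<in>carrier M. \<forall>y\<in>carrier M. \<forall>z\<in>carrier M. le M x y \<and> le M y z \<longrightarrow> le M x z) \<and>
     (\<forall>x\<in>carrier M. \<forall>y\<in>carrier M. \<forall>z\<in>carrier M.
        le M x y \<longrightarrow> le M (mult M z x) (mult M z y) \<and> le M (mult M x z) (mult M y z))"

primrec opow :: "'a omonoid \<Rightarrow> 'a \<Rightarrow> nat \<Rightarrow> 'a" where
  "opow M x 0 = unit M"
| "opow M x (Suc n) = mult M x (opow M x n)"

definition is_Tq :: "'a omonoid \<Rightarrow> nat \<Rightarrow> bool" where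
  "is_Tq M q \<longleftrightarrow> (\<exists>e\<in>carrier M. \<exists>f\<in>carrier M.
      mult M e e = e \<and> mult M f f = f \<and>
      mult M (opow M (mult M e f) q) e = e \<and>
      (\<forall>r::nat. r > 0 \<and> \<not> q dvd r \<longrightarrow> mult M (opow M (mult M e f) r) e \<noteq> e))"

definition odivides :: "'b omonoid \<Rightarrow> 'a omonoid \<Rightarrow> bool" where
  "odivides N M \<longleftrightarrow> (\<exists>S h.
      S \<subseteq> carrier M \<and> unit M \<in> S \<and> (\<forall>x\<in>S. \<forall>y\<in>S. mult M x y \<in> S) \<and>
      h ` S = carrier N \<and> h (unit M) = unit N \<and>
      (\<forall>x\<in>S. \<forall>y\<in>S. h (mult M x y) = mult N (h x) (h y)) \<and>
      (\<forall>x\<in>S. \<forall>y\<in>S. le M x y \<longrightarrow> le N (h x) (h y)))"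

definition is_group :: "'a omonoid \<Rightarrow> bool" where
  "is_group G \<longleftrightarrow> (\<forall>x\<in>carrier G. \<exists>y\<in>carrier G. mult G x y = unit G \<and> mult G y x = unit G)"

definition noncommutative :: "'a omonoid \<Rightarrow> bool" where
  "noncommutative G \<longleftrightarrow> (\<exists>x\<in>carrier G. \<exists>y\<in>carrier G. mult G x y \<noteq> mult G y x)"

definition synle :: "'c list set \<Rightarrow> 'c list \<Rightarrow> 'c list \<Rightarrow> bool" where
  "synle L x y \<longleftrightarrow> (\<forall>u v. u @ y @ v \<in> L \<longrightarrow> u @ x @ v \<in> L)"

definition syneq :: "'c list set \<Rightarrow> 'c list \<Rightarrow> 'c list \<Rightarrow> bool" where
  "syneq L x y \<longleftrightarrow> synle L x y \<and> synle L y x"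

definition synclass :: "'c list set \<Rightarrow> 'c list \<Rightarrow> 'c list set" where
  "synclass L w = {x. syneq L x w}"

definition rep :: "'c list set \<Rightarrow> 'c list" where
  "rep A = (SOME x. x \<in> A)"

definition synmon :: "'c list set \<Rightarrow> 'c list set omonoid" where
  "synmon L = \<lparr> carrier = range (synclass L),
                mult = (\<lambda>A B. synclass L (rep A @ rep B)),
                unit = synclass L [],
                le = (\<lambda>A B. synle L (rep A) (rep B)) \<rparr>"

datatype ab = a | b

definition L_BA2 :: "ab list set" where
  "L_BA2 = {concat (replicate k [a, b]) | k. True}"

definition L_U :: "ab list set" where
  "L_U = {w. \<not> (\<exists>u v. w = u @ [a, a] @ v)}"

definition BA2_plus :: "ab list set omonoid" where
  "BA2_plus = synmon L_BA2"

definition U_plus :: "ab list set omonoid" where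
  "U_plus = synmon L_U"

definition cover_num :: "'x set \<Rightarrow> 'y set \<Rightarrow> ('x \<Rightarrow> 'y \<Rightarrow> bool) \<Rightarrow> nat" where
  "cover_num X Y f = (LEAST k. \<exists>R :: nat \<Rightarrow> 'x set \<times> 'y set.
      (\<forall>i<k. fst (R i) \<subseteq> X \<and> snd (R i) \<subseteq> Y \<and>
             (\<forall>x\<in>fst (R i). \<forall>y\<in>snd (R i). f x y)) \<and>
      {(x, y). x \<in> X \<and> y \<in> Y \<and> f x y} = (\<Union>i<k. fst (R i) \<times> snd (R i)))"

definition N1 :: "'x set \<Rightarrow> 'y set \<Rightarrow> ('x \<Rightarrow> 'y \<Rightarrow> bool) \<Rightarrow> real" where
  "N1 X Y f = log 2 (real (max 1 (cover_num X Y f)))"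

definition lprod :: "'a omonoid \<Rightarrow> 'a list \<Rightarrow> 'a" where
  "lprod M zs = foldr (mult M) zs (unit M)"

text \<open>Alice's list xs = [m1,m3,...], Bob's ys = [m2,m4,...]; product m1 m2 m3 m4 ...\<close>
definition interleave :: "'a list \<Rightarrow> 'a list \<Rightarrow> 'a list" where
  "interleave xs ys = concat (map (\<lambda>(x, y). [x, y]) (zip xs ys))"

definition inputs :: "'a omonoid \<Rightarrow> nat \<Rightarrow> 'a list set" where
  "inputs M n = {xs. length xs = n \<and> set xs \<subseteq> carrier M}"

definition order_ideal :: "'a omonoid \<Rightarrow> 'a set \<Rightarrow> bool" where
  "order_ideal M I \<longleftrightarrow> I \<subseteq> carrier M \<and>
     (\<forall>x\<in>carrier M. \<forall>y\<in>I. le M x y \<longrightarrow> x \<in> I)"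

definition N1_ideal :: "'a omonoid \<Rightarrow> 'a set \<Rightarrow> nat \<Rightarrow> real" where
  "N1_ideal M I n = N1 (inputs M n) (inputs M n) (\<lambda>xs ys. lprod M (interleave xs ys) \<in> I)"

definition N1_mon :: "'a omonoid \<Rightarrow> nat \<Rightarrow> real" where
  "N1_mon M n = Max ((\<lambda>I. N1_ideal M I n) ` {I. order_ideal M I})"

end

theory Submission
  imports Defs "HOL-Computational_Algebra.Primes"
begin

hide_const (open) Multiset.mult


context
  fixes M :: "'m omonoid"
  assumes OM: "ordered_monoid M"
begin

lemma OMs:
  "unit M \<in> carrier M"
  "\<forall>x\<in>carrier M. \<forall>y\<in>carrier M. mult M x y \<in> carrier M"
  "\<forall>x\<in>carrier M. \<forall>y\<in>carrier M. \<forall>z\<in>carrier M.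
        mult M (mult M x y) z = mult M x (mult M y z)"
  "\<forall>x\<in>carrier M. mult M (unit M) x = x \<and> mult M x (unit M) = x"
  "\<forall>x\<in>carrier M. le M x x"
  "\<forall>x\<in>carrier M. \<forall>y\<in>carrier M. le M x y \<and> le M y x \<longrightarrow> x = y"
  "\<forall>x\<in>carrier M. \<forall>y\<in>carrier M. \<forall>z\<in>carrier M. le M x y \<and> le M y z \<longrightarrow> le M x z"
  "\<forall>x\<in>carrier M. \<forall>y\<in>carrier M. \<forall>z\<in>carrier M.
        le M x y \<longrightarrow> le M (mult M z x) (mult M z y) \<and> le M (mult M x z) (mult M y z)"
  by (insert OM, unfold ordered_monoid_def, (elim conjE, assumption)+)

lemma om_unit: "unit M \<in> carrier M" by (rule OMs(1))
lemma om_closed: "x \<in> carrier M \<Longrightarrow> y \<in> carrier M \<Longrightarrow> mult M x y \<in> carrier M"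
  using OMs(2) by blast
lemma om_assoc: "x \<in> carrier M \<Longrightarrow> y \<in> carrier M \<Longrightarrow> z \<in> carrier M \<Longrightarrow>
   mult M (mult M x y) z = mult M x (mult M y z)"
  using OMs(3) by blast
lemma om_lunit: "x \<in> carrier M \<Longrightarrow> mult M (unit M) x = x"
  using OMs(4) by blast
lemma om_runit: "x \<in> carrier M \<Longrightarrow> mult M x (unit M) = x"
  using OMs(4) by blast
lemma om_refl: "x \<in> carrier M \<Longrightarrow> le M x x"
  using OMs(5) by blast
lemma om_antisym: "x \<in> carrier M \<Longrightarrow> y \<in> carrier M \<Longrightarrow> le M x y \<Longrightarrow> le M y x \<Longrightarrow> x = y"
  using OMs(6) by blast
lemma om_trans: "x \<in> carrier M \<Longrightarrow> y \<in> carrier M \<Longrightarrow> z \<in> carrier M \<Longrightarrow> le M x y \<Longrightarrow> le M y z \<Longrightarrow> le M x z"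
  using OMs(7) by blast
lemma om_monoL: "x \<in> carrier M \<Longrightarrow> y \<in> carrier M \<Longrightarrow> z \<in> carrier M \<Longrightarrow> le M x y \<Longrightarrow> le M (mult M z x) (mult M z y)"
  using OMs(8) by blast
lemma om_monoR: "x \<in> carrier M \<Longrightarrow> y \<in> carrier M \<Longrightarrow> z \<in> carrier M \<Longrightarrow> le M x y \<Longrightarrow> le M (mult M x z) (mult M y z)"
  using OMs(8) by blast

lemma opow_closed: "x \<in> carrier M \<Longrightarrow> opow M x n \<in> carrier M"
  by (induction n) (auto simp: om_unit om_closed)

lemma opow_add: "x \<in> carrier M \<Longrightarrow> opow M x (m + n) = mult M (opow M x m) (opow M x n)"
  by (induction m) (auto simp: om_lunit opow_closed om_assoc)

lemma opow_mult: "x \<in> carrier M \<Longrightarrow> opow M x (m * n) = opow M (opow M x m) n"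
proof (induction n)
  case 0 thus ?case by simp
next
  case (Suc n)
  have "opow M x (m * Suc n) = opow M x (m + m * n)" by simp
  also have "\<dots> = mult M (opow M x m) (opow M x (m * n))" using Suc.prems by (rule opow_add)
  finally show ?case using Suc by simp
qed

lemma opow_Suc2: "x \<in> carrier M \<Longrightarrow> opow M x (Suc n) = mult M (opow M x n) x"
  using opow_add[of x n 1] by (simp add: om_runit)

lemma lprod_closed: "set xs \<subseteq> carrier M \<Longrightarrow> lprod M xs \<in> carrier M"
  by (induction xs) (auto simp: lprod_def om_unit om_closed)

lemma lprod_append: "set xs \<subseteq> carrier M \<Longrightarrow> set ys \<subseteq> carrier M \<Longrightarrow>
   lprod M (xs @ ys) = mult M (lprod M xs) (lprod M ys)"
proof (induction xs)
  case Nil thus ?case by (simp add: lprod_def om_lunit lprod_closed[unfolded lprod_def])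
next
  case (Cons x xs)
  thus ?case using lprod_closed[of xs] lprod_closed[of ys]
    by (simp add: lprod_def om_assoc)
qed

lemma lprod_concat_replicate: "set xs \<subseteq> carrier M \<Longrightarrow>
   lprod M (concat (replicate r xs)) = opow M (lprod M xs) r"
proof (induction r)
  case 0 thus ?case by (simp add: lprod_def)
next
  case (Suc r)
  have "lprod M (concat (replicate (Suc r) xs)) = lprod M (xs @ concat (replicate r xs))" by simp
  also have "\<dots> = mult M (lprod M xs) (lprod M (concat (replicate r xs)))"
    using Suc.prems by (intro lprod_append) auto
  finally show ?case using Suc by simp
qed

lemma lprod_units: "lprod M (replicate k (unit M)) = unit M"
  by (induction k) (auto simp: lprod_def om_unit om_lunit)

end

lemma interleave_append: "length xs1 = length ys1 \<Longrightarrow>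
  interleave (xs1 @ xs2) (ys1 @ ys2) = interleave xs1 ys1 @ interleave xs2 ys2"
  by (simp add: interleave_def zip_append)

lemma interleave_set: "set (interleave xs ys) \<subseteq> set xs \<union> set ys"
  unfolding interleave_def by (auto dest: set_zip_leftD set_zip_rightD)

lemma interleave_concat_map:
  assumes "length us = length vs" "\<And>u. length (A u) = L" "\<And>v. length (B v) = L"
  shows "interleave (concat (map A us)) (concat (map B vs)) =
         concat (map (\<lambda>(u, v). interleave (A u) (B v)) (zip us vs))"
  using assms(1)
proof (induction us arbitrary: vs)
  case Nil thus ?case by (simp add: interleave_def)
next
  case (Cons u us)
  then obtain v vs' where "vs = v # vs'" by (cases vs) auto
  with Cons show ?case by (simp add: interleave_append assms)
qed

lemma interleave_replicate:
  assumes "length xs = length ys"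
  shows "interleave (concat (replicate r xs)) (concat (replicate r ys)) =
         concat (replicate r (interleave xs ys))"
  by (induction r) (auto simp: interleave_def interleave_append[unfolded interleave_def] assms)

lemma interleave_map: "length xs = length ys \<Longrightarrow> interleave (map h xs) (map h ys) = map h (interleave xs ys)"
  by (induction xs ys rule: list_induct2) (auto simp: interleave_def)



section \<open>Covers\<close>

definition is_cover :: "'x set \<Rightarrow> 'y set \<Rightarrow> ('x \<Rightarrow> 'y \<Rightarrow> bool) \<Rightarrow> nat \<Rightarrow> (nat \<Rightarrow> 'x set \<times> 'y set) \<Rightarrow> bool" where
  "is_cover X Y f k R \<longleftrightarrow> (\<forall>i<k. fst (R i) \<subseteq> X \<and> snd (R i) \<subseteq> Y \<and>
             (\<forall>x\<in>fst (R i). \<forall>y\<in>snd (R i). f x y)) \<and>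
      {(x, y). x \<in> X \<and> y \<in> Y \<and> f x y} = (\<Union>i<k. fst (R i) \<times> snd (R i))"

lemma cover_num_alt: "cover_num X Y f = (LEAST k. \<exists>R. is_cover X Y f k R)"
  unfolding cover_num_def is_cover_def by simp

lemma cover_exists:
  assumes "finite X" "finite Y"
  shows "\<exists>k R. is_cover X Y f k R"
proof -
  define P where "P = {(x, y). x \<in> X \<and> y \<in> Y \<and> f x y}"
  have "finite P" unfolding P_def
    by (rule finite_subset[of _ "X \<times> Y"]) (use assms in auto)
  then obtain e where e: "bij_betw e {0..<card P} P" using ex_bij_betw_nat_finite by blast
  define R where "R i = ({fst (e i)}, {snd (e i)})" for i
  have "is_cover X Y f (card P) R"
    unfolding is_cover_def
  proof (intro conjI allI impI)
    fix i assume "i < card P"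
    hence "e i \<in> P" using e bij_betwE by fastforce
    thus "fst (R i) \<subseteq> X" "snd (R i) \<subseteq> Y" "\<forall>x\<in>fst (R i). \<forall>y\<in>snd (R i). f x y"
      unfolding R_def P_def by auto
  next
    show "{(x, y). x \<in> X \<and> y \<in> Y \<and> f x y} = (\<Union>i<card P. fst (R i) \<times> snd (R i))"
    proof
      show "{(x, y). x \<in> X \<and> y \<in> Y \<and> f x y} \<subseteq> (\<Union>i<card P. fst (R i) \<times> snd (R i))"
      proof
        fix z assume "z \<in> {(x, y). x \<in> X \<and> y \<in> Y \<and> f x y}"
        hence "z \<in> P" unfolding P_def .
        then obtain i where "i < card P" "e i = z" using e unfolding bij_betw_def
          by (metis atLeastLessThan_iff imageE)
        hence "z \<in> fst (R i) \<times> snd (R i)" unfolding R_def by (cases z) auto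
        thus "z \<in> (\<Union>i<card P. fst (R i) \<times> snd (R i))" using \<open>i < card P\<close> by blast
      qed
    next
      show "(\<Union>i<card P. fst (R i) \<times> snd (R i)) \<subseteq> {(x, y). x \<in> X \<and> y \<in> Y \<and> f x y}"
      proof
        fix z assume "z \<in> (\<Union>i<card P. fst (R i) \<times> snd (R i))"
        then obtain i where i: "i < card P" "z = e i" unfolding R_def by auto
        hence "e i \<in> P" using e bij_betwE by fastforce
        thus "z \<in> {(x, y). x \<in> X \<and> y \<in> Y \<and> f x y}" using i unfolding P_def by auto
      qed
    qed
  qed
  thus ?thesis by blast
qed

lemma cover_num_is_cover:
  assumes "finite X" "finite Y"
  shows "\<exists>R. is_cover X Y f (cover_num X Y f) R"
proof -
  obtain k R where "is_cover X Y f k R" using cover_exists[OF assms] by blast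
  hence "\<exists>R. is_cover X Y f (LEAST k. \<exists>R. is_cover X Y f k R) R"
    using LeastI_ex[where P="\<lambda>k. \<exists>R. is_cover X Y f k R"] by blast
  thus ?thesis unfolding cover_num_alt .
qed

lemma cover_num_le: "is_cover X Y f k R \<Longrightarrow> cover_num X Y f \<le> k"
  unfolding cover_num_alt by (auto intro: Least_le)

lemma cover_reduction:
  assumes fin: "finite X'" "finite Y'"
    and encA: "\<And>x. x \<in> X \<Longrightarrow> eA x \<in> X'"
    and encB: "\<And>y. y \<in> Y \<Longrightarrow> eB y \<in> Y'"
    and eq: "\<And>x y. x \<in> X \<Longrightarrow> y \<in> Y \<Longrightarrow> f' (eA x) (eB y) = f x y"
  shows "cover_num X Y f \<le> cover_num X' Y' f'"
proof -
  obtain R' where R': "is_cover X' Y' f' (cover_num X' Y' f') R'"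
    using cover_num_is_cover[OF fin] by blast
  define k where "k = cover_num X' Y' f'"
  define R where "R i = ({x \<in> X. eA x \<in> fst (R' i)}, {y \<in> Y. eB y \<in> snd (R' i)})" for i
  have "is_cover X Y f k R"
    unfolding is_cover_def
  proof (intro conjI allI impI)
    fix i assume i: "i < k"
    show "fst (R i) \<subseteq> X" "snd (R i) \<subseteq> Y" unfolding R_def by auto
    have r: "\<forall>x\<in>fst (R' i). \<forall>y\<in>snd (R' i). f' x y" using R' i unfolding is_cover_def k_def by blast
    show "\<forall>x\<in>fst (R i). \<forall>y\<in>snd (R i). f x y"
    proof (intro ballI)
      fix x y assume "x \<in> fst (R i)" "y \<in> snd (R i)"
      hence "x \<in> X" "y \<in> Y" "eA x \<in> fst (R' i)" "eB y \<in> snd (R' i)" unfolding R_def by auto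
      thus "f x y" using r eq by metis
    qed
  next
    show "{(x, y). x \<in> X \<and> y \<in> Y \<and> f x y} = (\<Union>i<k. fst (R i) \<times> snd (R i))"
    proof
      show "{(x, y). x \<in> X \<and> y \<in> Y \<and> f x y} \<subseteq> (\<Union>i<k. fst (R i) \<times> snd (R i))"
      proof clarify
        fix x y assume "x \<in> X" "y \<in> Y" "f x y"
        hence "(eA x, eB y) \<in> {(x, y). x \<in> X' \<and> y \<in> Y' \<and> f' x y}"
          using encA encB eq by auto
        hence "(eA x, eB y) \<in> (\<Union>i<k. fst (R' i) \<times> snd (R' i))"
          using R' unfolding is_cover_def k_def by blast
        thus "(x, y) \<in> (\<Union>i<k. fst (R i) \<times> snd (R i))"
          using \<open>x \<in> X\<close> \<open>y \<in> Y\<close> unfolding R_def by auto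
      qed
    next
      show "(\<Union>i<k. fst (R i) \<times> snd (R i)) \<subseteq> {(x, y). x \<in> X \<and> y \<in> Y \<and> f x y}"
      proof clarify
        fix i x y assume i: "i < k" and "x \<in> fst (R i)" "y \<in> snd (R i)"
        hence xy: "x \<in> X" "y \<in> Y" "eA x \<in> fst (R' i)" "eB y \<in> snd (R' i)" unfolding R_def by auto
        have r: "\<forall>x\<in>fst (R' i). \<forall>y\<in>snd (R' i). f' x y" using R' i unfolding is_cover_def k_def by blast
        show "x \<in> X \<and> y \<in> Y \<and> f x y" using xy r eq by metis
      qed
    qed
  qed
  thus ?thesis using cover_num_le k_def by blast
qed

lemma cover_counting:
  assumes fin: "finite X" "finite Y"
    and W: "W \<subseteq> {(x, y). x \<in> X \<and> y \<in> Y \<and> f x y}"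
    and rect: "\<And>S T. S \<subseteq> X \<Longrightarrow> T \<subseteq> Y \<Longrightarrow> (\<forall>x\<in>S. \<forall>y\<in>T. f x y) \<Longrightarrow> card (W \<inter> (S \<times> T)) \<le> K"
  shows "card W \<le> K * cover_num X Y f"
proof -
  obtain R where R: "is_cover X Y f (cover_num X Y f) R"
    using cover_num_is_cover[OF fin] by blast
  define k where "k = cover_num X Y f"
  have finW: "finite W"
    by (rule finite_subset[OF W], rule finite_subset[of _ "X \<times> Y"]) (use fin in auto)
  have U: "{(x, y). x \<in> X \<and> y \<in> Y \<and> f x y} = (\<Union>i<k. fst (R i) \<times> snd (R i))"
    using R unfolding is_cover_def k_def by (elim conjE)
  have "W = W \<inter> (\<Union>i<k. fst (R i) \<times> snd (R i))" using W unfolding U by (rule Int_absorb2[symmetric])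
  hence "W = (\<Union>i<k. W \<inter> (fst (R i) \<times> snd (R i)))" by simp
  hence "card W \<le> (\<Sum>i<k. card (W \<inter> (fst (R i) \<times> snd (R i))))"
    using card_UN_le[of "{..<k}" "\<lambda>i. W \<inter> (fst (R i) \<times> snd (R i))"] by simp
  also have "\<dots> \<le> (\<Sum>i<k. K)"
  proof (intro sum_mono)
    fix i assume "i \<in> {..<k}"
    hence "fst (R i) \<subseteq> X \<and> snd (R i) \<subseteq> Y \<and> (\<forall>x\<in>fst (R i). \<forall>y\<in>snd (R i). f x y)"
      using R unfolding is_cover_def k_def by simp
    thus "card (W \<inter> (fst (R i) \<times> snd (R i))) \<le> K" using rect by blast
  qed
  finally show ?thesis by (simp add: k_def mult.commute)
qed



lemma card_le_sum_fibers:
  assumes "finite B" "f ` A \<subseteq> B"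
  shows "card A \<le> (\<Sum>c\<in>B. card {x \<in> A. f x = c})"
proof -
  have "A = (\<Union>c\<in>B. {x \<in> A. f x = c})" using assms(2) by blast
  hence "card A = card (\<Union>c\<in>B. {x \<in> A. f x = c})" by simp
  also have "\<dots> \<le> (\<Sum>c\<in>B. card {x \<in> A. f x = c})" using card_UN_le[OF assms(1)] by blast
  finally show ?thesis .
qed

section \<open>Inner products mod p\<close>

definition ip :: "int list \<Rightarrow> int list \<Rightarrow> int" where
  "ip xs ys = sum_list (map2 (*) xs ys)"

lemma ip_Cons[simp]: "ip (x # xs) (y # ys) = x * y + ip xs ys"
  by (simp add: ip_def)

lemma ip_Nil[simp]: "ip [] ys = 0" by (simp add: ip_def)

definition VV :: "int \<Rightarrow> nat \<Rightarrow> int list set" where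
  "VV p t = {xs. set xs \<subseteq> {0..<p} \<and> length xs = t}"

lemma VV_finite: "finite (VV p t)"
proof -
  have "VV p t \<subseteq> {xs. set xs \<subseteq> {0..<p} \<and> length xs = t}" by (simp add: VV_def)
  thus ?thesis using finite_lists_length_eq[of "{0..<p}" t] unfolding VV_def by simp
qed

lemma VV_card: "card (VV p t) = nat p ^ t"
  unfolding VV_def by (subst card_lists_length_eq) auto

lemma VV_Suc: "xs \<in> VV p (Suc t) \<longleftrightarrow> (\<exists>x ys. xs = x # ys \<and> 0 \<le> x \<and> x < p \<and> ys \<in> VV p t)"
  unfolding VV_def by (cases xs) auto

lemma ip_diff_dvd:
  assumes "length ys = length zs"
  shows "p dvd ip xs (map2 (\<lambda>a b. (a - b) mod p) ys zs) - (ip xs ys - ip xs zs)"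
  using assms
proof (induction ys zs arbitrary: xs rule: list_induct2)
  case Nil thus ?case by (simp add: ip_def)
next
  case (Cons y ys z zs)
  show ?case
  proof (cases xs)
    case Nil thus ?thesis by (simp add: ip_def)
  next
    case (Cons x xs')
    have e: "ip xs (map2 (\<lambda>a b. (a - b) mod p) (y # ys) (z # zs)) - (ip xs (y # ys) - ip xs (z # zs))
        = x * ((y - z) mod p - (y - z)) + (ip xs' (map2 (\<lambda>a b. (a - b) mod p) ys zs) - (ip xs' ys - ip xs' zs))"
      by (simp add: Cons algebra_simps)
    have d1: "p dvd (y - z) mod p - (y - z)"
      using dvd_minus_mod[of p "y - z"] by (metis dvd_minus_iff minus_diff_eq)
    show ?thesis unfolding e using d1 Cons.IH[of xs'] by simp
  qed
qed

lemma ip_diff_mod: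
  assumes "length ys = length zs"
  shows "(ip xs (map2 (\<lambda>a b. (a - b) mod p) ys zs)) mod p = (ip xs ys - ip xs zs) mod p"
  using ip_diff_dvd[OF assms] mod_eq_dvd_iff by blast

lemma rect_bound:
  fixes p :: int
  assumes p: "prime p"
  shows "S \<subseteq> VV p t \<Longrightarrow> T \<subseteq> VV p t \<Longrightarrow> (\<forall>s\<in>S. \<forall>u\<in>T. p dvd ip s u) \<Longrightarrow>
         card S * card T \<le> nat p ^ t"
proof (induction t arbitrary: S T)
  case 0
  have "VV p 0 = {[]}" unfolding VV_def by auto
  hence "card S \<le> 1" "card T \<le> 1" using 0 by (auto intro: card_mono[of "{[]}", simplified])
  thus ?case using mult_le_mono[of "card S" 1 "card T" 1] by simp
next
  case (Suc t)
  have p1: "p > 1" using p prime_gt_1_int by blast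
  have finS: "finite S" and finT: "finite T" using Suc.prems VV_finite finite_subset by metis+
  have tlV: "tl x \<in> VV p t" if "x \<in> VV p (Suc t)" for x using that by (auto simp: VV_Suc)
  have hdr: "0 \<le> hd x \<and> hd x < p" if "x \<in> VV p (Suc t)" for x using that by (auto simp: VV_Suc)
  have ipsplit: "ip s u = hd s * hd u + ip (tl s) (tl u)" if "s \<in> VV p (Suc t)" "u \<in> VV p (Suc t)" for s u
    using that by (auto simp: VV_Suc)
  have hdtl: "x = hd x # tl x" if "x \<in> VV p (Suc t)" for x using that by (auto simp: VV_Suc)
  show ?case
  proof (cases "\<forall>u\<in>T. hd u = 0")
    case True
    have injT: "inj_on tl T"
    proof (rule inj_onI)
      fix u v assume "u \<in> T" "v \<in> T" "tl u = tl v"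
      thus "u = v" using True hdtl Suc.prems(2) by (metis subsetD)
    qed
    have "card S * card T \<le> (\<Sum>c\<in>{0..<p}. card {s \<in> S. hd s = c}) * card T"
    proof -
      have "hd ` S \<subseteq> {0..<p}"
      proof
        fix y assume "y \<in> hd ` S"
        then obtain s where "s \<in> S" "y = hd s" by blast
        thus "y \<in> {0..<p}" using hdr[of s] Suc.prems(1) by auto
      qed
      hence "card S \<le> (\<Sum>c\<in>{0..<p}. card {s \<in> S. hd s = c})" using card_le_sum_fibers[of "{0..<p}" hd S] by simp
      thus ?thesis by (rule mult_le_mono1)
    qed
    also have "\<dots> = (\<Sum>c\<in>{0..<p}. card {s \<in> S. hd s = c} * card T)" by (simp add: sum_distrib_right)
    also have "\<dots> \<le> (\<Sum>c\<in>{0..<p}. nat p ^ t)"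
    proof (rule sum_mono)
      fix c assume "c \<in> {0..<p}"
      define Sc where "Sc = {s \<in> S. hd s = c}"
      have injS: "inj_on tl Sc"
      proof (rule inj_onI)
        fix u v assume "u \<in> Sc" "v \<in> Sc" "tl u = tl v"
        thus "u = v" using hdtl Suc.prems(1) unfolding Sc_def by (metis (mono_tags, lifting) mem_Collect_eq subsetD)
      qed
      have "card (tl ` Sc) * card (tl ` T) \<le> nat p ^ t"
      proof (rule Suc.IH)
        show "tl ` Sc \<subseteq> VV p t" using tlV Suc.prems(1) unfolding Sc_def by blast
        show "tl ` T \<subseteq> VV p t" using tlV Suc.prems(2) by blast
        show "\<forall>s\<in>tl ` Sc. \<forall>u\<in>tl ` T. p dvd ip s u"
        proof (intro ballI)
          fix s' u' assume "s' \<in> tl ` Sc" "u' \<in> tl ` T"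
          then obtain s u where su: "s \<in> Sc" "u \<in> T" "s' = tl s" "u' = tl u" by blast
          hence "s \<in> S" unfolding Sc_def by simp
          hence "p dvd ip s u" using su Suc.prems(3) by blast
          moreover have "ip s u = ip s' u'" using ipsplit[of s u] su True Suc.prems \<open>s \<in> S\<close> by auto
          ultimately show "p dvd ip s' u'" by simp
        qed
      qed
      thus "card {s \<in> S. hd s = c} * card T \<le> nat p ^ t"
        using card_image[OF injS] card_image[OF injT] unfolding Sc_def by simp
    qed
    also have "\<dots> = nat p ^ Suc t" using p1 by simp
    finally show ?thesis .
  next
    case False
    then obtain u0 where u0: "u0 \<in> T" "hd u0 \<noteq> 0" by blast
    have u0r: "0 < hd u0" "hd u0 < p" using hdr[of u0] u0 Suc.prems(2) by auto
    have injS: "inj_on tl S"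
    proof (rule inj_onI)
      fix s s' assume ss: "s \<in> S" "s' \<in> S" "tl s = tl s'"
      have V: "s \<in> VV p (Suc t)" "s' \<in> VV p (Suc t)" "u0 \<in> VV p (Suc t)" using ss u0 Suc.prems by auto
      have "p dvd ip s u0" "p dvd ip s' u0" using ss u0 Suc.prems(3) by auto
      hence "p dvd ip s u0 - ip s' u0" by simp
      moreover have "ip s u0 - ip s' u0 = (hd s - hd s') * hd u0"
        using ipsplit[OF V(1) V(3)] ipsplit[OF V(2) V(3)] ss by (simp add: algebra_simps)
      ultimately have "p dvd (hd s - hd s') * hd u0" by simp
      moreover have "\<not> p dvd hd u0" using zdvd_not_zless[OF u0r] .
      ultimately have dv: "p dvd hd s - hd s'" by (simp add: prime_dvd_mult_iff[OF p])
      have lt: "\<bar>hd s - hd s'\<bar> < p" using hdr[OF V(1)] hdr[OF V(2)] by auto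
      have "hd s - hd s' = 0"
      proof (rule ccontr)
        assume "hd s - hd s' \<noteq> 0"
        hence "\<bar>p\<bar> \<le> \<bar>hd s - hd s'\<bar>" using dvd_imp_le_int dv by blast
        thus False using lt p1 by linarith
      qed
      hence "hd s = hd s'" by simp
      hence "hd s # tl s = hd s' # tl s'" using ss(3) by simp
      thus "s = s'" using hdtl[OF V(1)] hdtl[OF V(2)] by simp
    qed
    have "card S * card T \<le> card S * (\<Sum>c\<in>{0..<p}. card {u \<in> T. hd u = c})"
    proof -
      have "hd ` T \<subseteq> {0..<p}"
      proof
        fix y assume "y \<in> hd ` T"
        then obtain s where "s \<in> T" "y = hd s" by blast
        thus "y \<in> {0..<p}" using hdr[of s] Suc.prems(2) by auto
      qed
      hence "card T \<le> (\<Sum>c\<in>{0..<p}. card {s \<in> T. hd s = c})" using card_le_sum_fibers[of "{0..<p}" hd T] by simp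
      thus ?thesis by (rule mult_le_mono2)
    qed
    also have "\<dots> = (\<Sum>c\<in>{0..<p}. card S * card {u \<in> T. hd u = c})" by (simp add: sum_distrib_left)
    also have "\<dots> \<le> (\<Sum>c\<in>{0..<p}. nat p ^ t)"
    proof (rule sum_mono)
      fix c assume "c \<in> {0..<p}"
      define Tc where "Tc = {u \<in> T. hd u = c}"
      show "card S * card {u \<in> T. hd u = c} \<le> nat p ^ t"
      proof (cases "Tc = {}")
        case True hence "{u \<in> T. hd u = c} = {}" unfolding Tc_def .
        thus ?thesis by (metis card.empty mult_0_right zero_le)
      next
        case False
        then obtain w where w: "w \<in> Tc" by blast
        have wV: "w \<in> VV p (Suc t)" using w Suc.prems(2) unfolding Tc_def by auto
        define g where "g u = map2 (\<lambda>a b. (a - b) mod p) (tl u) (tl w)" for u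
        have gV: "g u \<in> VV p t" if "u \<in> VV p (Suc t)" for u
        proof -
          have "length (tl u) = t" "length (tl w) = t" using tlV[OF that] tlV[OF wV] by (auto simp: VV_def)
          moreover have "set (g u) \<subseteq> {0..<p}"
          proof
            fix z assume "z \<in> set (g u)"
            then obtain a b where "z = (a - b) mod p" unfolding g_def by auto
            thus "z \<in> {0..<p}" using p1 by simp
          qed
          ultimately show ?thesis unfolding VV_def g_def by simp
        qed
        have injg: "inj_on g Tc"
        proof (rule inj_onI)
          fix u v assume uv: "u \<in> Tc" "v \<in> Tc" "g u = g v"
          have uV: "u \<in> VV p (Suc t)" "v \<in> VV p (Suc t)" using uv Suc.prems(2) unfolding Tc_def by auto
          have len: "length (tl u) = t" "length (tl v) = t" "length (tl w) = t"
            using tlV[OF uV(1)] tlV[OF uV(2)] tlV[OF wV] by (auto simp: VV_def)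
          have "tl u = tl v"
          proof (rule nth_equalityI)
            show "length (tl u) = length (tl v)" using len by simp
            fix i assume i: "i < length (tl u)"
            have "g u ! i = g v ! i" using uv by simp
            hence eq: "(tl u ! i - tl w ! i) mod p = (tl v ! i - tl w ! i) mod p"
              using i len unfolding g_def by simp
            have "tl u ! i \<in> set (tl u)" "tl v ! i \<in> set (tl v)" using i len by simp_all
            hence r: "0 \<le> tl u ! i" "tl u ! i < p" "0 \<le> tl v ! i" "tl v ! i < p"
              using tlV[OF uV(1)] tlV[OF uV(2)] unfolding VV_def by auto
            have "p dvd (tl u ! i - tl w ! i) - (tl v ! i - tl w ! i)"
              using eq by (simp only: mod_eq_dvd_iff)
            hence "p dvd tl u ! i - tl v ! i" by simp
            hence "(tl u ! i) mod p = (tl v ! i) mod p" by (simp only: mod_eq_dvd_iff)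
            thus "tl u ! i = tl v ! i" using r by simp
          qed
          moreover have "hd u = hd v" using uv unfolding Tc_def by simp
          ultimately have "hd u # tl u = hd v # tl v" by simp
          thus "u = v" using hdtl[OF uV(1)] hdtl[OF uV(2)] by simp
        qed
        have "card (tl ` S) * card (g ` Tc) \<le> nat p ^ t"
        proof (rule Suc.IH)
          show "tl ` S \<subseteq> VV p t" using tlV Suc.prems(1) by blast
          show "g ` Tc \<subseteq> VV p t" using gV Suc.prems(2) unfolding Tc_def by blast
          show "\<forall>s\<in>tl ` S. \<forall>u\<in>g ` Tc. p dvd ip s u"
          proof (intro ballI)
            fix s' u' assume "s' \<in> tl ` S" "u' \<in> g ` Tc"
            then obtain s u where su: "s \<in> S" "u \<in> Tc" "s' = tl s" "u' = g u" by blast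
            have V: "s \<in> VV p (Suc t)" "u \<in> VV p (Suc t)" using su Suc.prems unfolding Tc_def by auto
            have len: "length (tl u) = length (tl w)"
              using tlV[OF V(2)] tlV[OF wV] by (auto simp: VV_def)
            have "ip s' u' mod p = (ip (tl s) (tl u) - ip (tl s) (tl w)) mod p"
              using ip_diff_mod[OF len] su unfolding g_def by simp
            also have "ip (tl s) (tl u) - ip (tl s) (tl w) = ip s u - ip s w"
              using ipsplit[OF V] ipsplit[OF V(1) wV] su w unfolding Tc_def by simp
            also have "(ip s u - ip s w) mod p = 0"
            proof -
              have "p dvd ip s u" "p dvd ip s w" using su w Suc.prems(3) unfolding Tc_def by auto
              thus ?thesis by simp
            qed
            finally show "p dvd ip s' u'" by (simp add: dvd_eq_mod_eq_0)
          qed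
        qed
        thus ?thesis using card_image[OF injS] card_image[OF injg] unfolding Tc_def by simp
      qed
    qed
    also have "\<dots> = nat p ^ Suc t" using p1 by simp
    finally show ?thesis .
  qed
qed



definition BITS :: "nat \<Rightarrow> bool list set" where
  "BITS k = {us. length us = k}"

definition cnt :: "bool list \<Rightarrow> bool list \<Rightarrow> nat" where
  "cnt us vs = length (filter (\<lambda>(u, v). u \<and> v) (zip us vs))"

lemma BITS_finite: "finite (BITS k)"
proof -
  have "BITS k = {xs. set xs \<subseteq> UNIV \<and> length xs = k}" unfolding BITS_def by simp
  thus ?thesis using finite_lists_length_eq[of "UNIV :: bool set" k] by simp
qed

lemma BITS_card: "card (BITS k) = 2 ^ k"
proof -
  have "BITS k = {xs. set xs \<subseteq> UNIV \<and> length xs = k}" unfolding BITS_def by simp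
  thus ?thesis using card_lists_length_eq[of "UNIV :: bool set" k] by simp
qed

lemma cnt_append: "length xs1 = length ys1 \<Longrightarrow> cnt (xs1 @ xs2) (ys1 @ ys2) = cnt xs1 ys1 + cnt xs2 ys2"
  by (simp add: cnt_def zip_append)

lemma cnt_Cons[simp]: "cnt (x # xs) (y # ys) = (if x \<and> y then 1 else 0) + cnt xs ys"
  by (simp add: cnt_def)

lemma cnt_Nil[simp]: "cnt [] ys = 0" by (simp add: cnt_def)

lemma cnt_zero_iff: "length us = length vs \<Longrightarrow> cnt us vs = 0 \<longleftrightarrow> (\<forall>i<length us. \<not> (us ! i \<and> vs ! i))"
  by (induction us vs rule: list_induct2) (auto simp: nth_Cons split: nat.splits)

lemma cnt_replicate_False: "cnt (replicate m False) ys = 0"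
  by (induction m arbitrary: ys) (auto simp: cnt_def, case_tac ys, auto)

section \<open>Disjointness\<close>

lemma disj_bound: "2 ^ k \<le> cover_num (BITS k) (BITS k) (\<lambda>us vs. cnt us vs = 0)"
proof -
  define W where "W = (\<lambda>s. (s, map Not s)) ` BITS k"
  have "card W = 2 ^ k" unfolding W_def
    by (subst card_image) (auto simp: inj_on_def BITS_card)
  moreover have "card W \<le> 1 * cover_num (BITS k) (BITS k) (\<lambda>us vs. cnt us vs = 0)"
  proof (rule cover_counting[OF BITS_finite BITS_finite])
    show "W \<subseteq> {(x, y). x \<in> BITS k \<and> y \<in> BITS k \<and> cnt x y = 0}"
    proof
      fix z assume "z \<in> W"
      then obtain s where s: "s \<in> BITS k" "z = (s, map Not s)" unfolding W_def by blast
      have "cnt s (map Not s) = 0"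
        using cnt_zero_iff[of s "map Not s"] by simp
      thus "z \<in> {(x, y). x \<in> BITS k \<and> y \<in> BITS k \<and> cnt x y = 0}" using s by (simp add: BITS_def)
    qed
  next
    fix S T assume ST: "S \<subseteq> BITS k" "T \<subseteq> BITS k" "\<forall>x\<in>S. \<forall>y\<in>T. cnt x y = 0"
    have fin: "finite (W \<inter> S \<times> T)" using BITS_finite ST
      by (meson finite_Int finite_SigmaI finite_subset)
    have "\<forall>a\<in>W \<inter> S \<times> T. \<forall>b\<in>W \<inter> S \<times> T. a = b"
    proof (intro ballI)
      fix z1 z2 assume z: "z1 \<in> W \<inter> S \<times> T" "z2 \<in> W \<inter> S \<times> T"
      then obtain s1 s2 where s: "z1 = (s1, map Not s1)" "z2 = (s2, map Not s2)" "s1 \<in> BITS k" "s2 \<in> BITS k"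
        unfolding W_def by blast
      have in1: "s1 \<in> S" "map Not s1 \<in> T" "s2 \<in> S" "map Not s2 \<in> T" using z s by auto
      have c1: "cnt s1 (map Not s2) = 0" "cnt s2 (map Not s1) = 0" using ST(3) in1 by auto
      have len: "length s1 = k" "length s2 = k" using s by (auto simp: BITS_def)
      have "s1 = s2"
      proof (rule nth_equalityI)
        show "length s1 = length s2" using len by simp
        fix i assume i: "i < length s1"
        have "\<not> (s1 ! i \<and> \<not> s2 ! i)" using c1(1) cnt_zero_iff[of s1 "map Not s2"] i len by simp
        moreover have "\<not> (s2 ! i \<and> \<not> s1 ! i)" using c1(2) cnt_zero_iff[of s2 "map Not s1"] i len by simp
        ultimately show "s1 ! i = s2 ! i" by blast
      qed
      thus "z1 = z2" using s by simp
    qed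
    thus "card (W \<inter> S \<times> T) \<le> 1" using card_le_Suc0_iff_eq[OF fin] by simp
  qed
  ultimately show ?thesis by simp
qed

lemma ip_cover:
  fixes p :: int
  assumes p: "prime p"
  shows "nat p ^ (2 * t) \<le> nat p ^ (Suc t) * cover_num (VV p (Suc t)) (VV p (Suc t)) (\<lambda>a b. p dvd ip a b)"
proof -
  have p1: "p > 1" using p prime_gt_1_int by blast
  define F where "F = (\<lambda>(a, b). (1 # a, ((- ip a b) mod p) # b))"
  define W where "W = F ` (VV p t \<times> VV p t)"
  have injF: "inj_on F (VV p t \<times> VV p t)" unfolding F_def inj_on_def by auto
  have "card W = nat p ^ (2 * t)" unfolding W_def
    by (simp add: card_image[OF injF] card_cartesian_product VV_card power_mult_distrib mult_2 power_add)
  moreover have "card W \<le> nat p ^ (Suc t) * cover_num (VV p (Suc t)) (VV p (Suc t)) (\<lambda>a b. p dvd ip a b)"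
  proof (rule cover_counting[OF VV_finite VV_finite])
    show "W \<subseteq> {(x, y). x \<in> VV p (Suc t) \<and> y \<in> VV p (Suc t) \<and> p dvd ip x y}"
    proof
      fix z assume "z \<in> W"
      then obtain a b where ab: "a \<in> VV p t" "b \<in> VV p t" "z = F (a, b)" unfolding W_def by blast
      have "(- ip a b) mod p + ip a b = (- ip a b) mod p - (- ip a b)" by simp
      hence "p dvd (- ip a b) mod p + ip a b" using dvd_minus_mod[of p "- ip a b"]
        by (metis dvd_minus_iff minus_diff_eq)
      moreover have "0 \<le> (- ip a b) mod p" "(- ip a b) mod p < p" using p1 by simp_all
      ultimately show "z \<in> {(x, y). x \<in> VV p (Suc t) \<and> y \<in> VV p (Suc t) \<and> p dvd ip x y}"
        using ab p1 unfolding F_def by (simp add: VV_Suc)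
    qed
  next
    fix S T assume ST: "S \<subseteq> VV p (Suc t)" "T \<subseteq> VV p (Suc t)" "\<forall>x\<in>S. \<forall>y\<in>T. p dvd ip x y"
    have finST: "finite (S \<times> T)" using ST VV_finite finite_subset finite_SigmaI by metis
    have "card (W \<inter> S \<times> T) \<le> card (S \<times> T)" by (rule card_mono[OF finST]) blast
    also have "\<dots> = card S * card T" by (simp add: card_cartesian_product)
    also have "\<dots> \<le> nat p ^ Suc t" by (rule rect_bound[OF p ST])
    finally show "card (W \<inter> S \<times> T) \<le> nat p ^ Suc t" .
  qed
  ultimately show ?thesis by simp
qed

lemma ip_cover_lower:
  fixes p :: int
  assumes p: "prime p"
  shows "nat p ^ (t - 1) \<le> cover_num (VV p (Suc t)) (VV p (Suc t)) (\<lambda>a b. p dvd ip a b)"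
proof (cases "t = 0")
  case True
  have "\<exists>R. is_cover (VV p 1) (VV p 1) (\<lambda>a b. p dvd ip a b) (cover_num (VV p 1) (VV p 1) (\<lambda>a b. p dvd ip a b)) R"
    using cover_num_is_cover[OF VV_finite VV_finite] by blast
  then obtain R where R: "is_cover (VV p 1) (VV p 1) (\<lambda>a b. p dvd ip a b) (cover_num (VV p 1) (VV p 1) (\<lambda>a b. p dvd ip a b)) R" by blast
  have p1: "p > 1" using p prime_gt_1_int by blast
  have "([0], [0]) \<in> {(x, y). x \<in> VV p 1 \<and> y \<in> VV p 1 \<and> p dvd ip x y}"
    using p1 by (simp add: VV_def)
  hence "cover_num (VV p 1) (VV p 1) (\<lambda>a b. p dvd ip a b) \<noteq> 0"
    using R unfolding is_cover_def by auto
  thus ?thesis using True by simp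
next
  case False
  define c where "c = cover_num (VV p (Suc t)) (VV p (Suc t)) (\<lambda>a b. p dvd ip a b)"
  have "nat p ^ (t - 1) * nat p ^ (Suc t) = nat p ^ (2 * t)"
  proof -
    have "t - 1 + Suc t = 2 * t" using False by simp
    thus ?thesis by (metis power_add)
  qed
  also have "\<dots> \<le> nat p ^ (Suc t) * c" using ip_cover[OF p, of t] unfolding c_def .
  finally have "nat p ^ (t - 1) * nat p ^ (Suc t) \<le> c * nat p ^ (Suc t)" by (simp add: mult.commute)
  moreover have "nat p ^ Suc t > 0" using prime_gt_1_int[OF p] by simp
  ultimately show ?thesis unfolding c_def by simp
qed



section \<open>Encoding Z_p vectors into bits\<close>

definition blkA :: "nat \<Rightarrow> int \<Rightarrow> bool list" where
  "blkA m av = concat (map (\<lambda>j. replicate m (int j < av)) [0..<m])"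

definition blkB :: "nat \<Rightarrow> int \<Rightarrow> bool list" where
  "blkB m bv = concat (replicate m (map (\<lambda>k. int k < bv) [0..<m]))"

lemma length_concat_const: "(\<And>x. length (f x) = L) \<Longrightarrow> length (concat (map f xs)) = length xs * L"
  by (induction xs) auto

lemma length_concat_replicate: "length (concat (replicate n xs)) = n * length xs"
  by (induction n) auto

lemma blkA_len[simp]: "length (blkA m av) = m * m"
  unfolding blkA_def by (subst length_concat_const[where L=m]) auto

lemma blkB_len[simp]: "length (blkB m bv) = m * m"
  unfolding blkB_def by (simp add: length_concat_replicate)

lemma cnt_replicate: "length ys = n \<Longrightarrow> cnt (replicate n x) ys = (if x then length (filter (\<lambda>x. x) ys) else 0)"
  by (induction ys arbitrary: n) auto

lemma cnt_grid:
  assumes "length Q = m"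
  shows "cnt (concat (map (\<lambda>j. replicate m (P j)) js)) (concat (replicate (length js) Q))
         = length (filter P js) * length (filter (\<lambda>x. x) Q)"
proof (induction js)
  case Nil thus ?case by simp
next
  case (Cons j js)
  have "cnt (concat (map (\<lambda>j. replicate m (P j)) (j # js))) (concat (replicate (length (j # js)) Q))
      = cnt (replicate m (P j) @ concat (map (\<lambda>j. replicate m (P j)) js)) (Q @ concat (replicate (length js) Q))"
    by simp
  also have "\<dots> = cnt (replicate m (P j)) Q + cnt (concat (map (\<lambda>j. replicate m (P j)) js)) (concat (replicate (length js) Q))"
    using assms by (simp add: cnt_append)
  finally show ?case using Cons cnt_replicate[OF assms] by simp
qed

lemma filter_upt_less: "0 \<le> av \<Longrightarrow> length (filter (\<lambda>j. int j < av) [0..<m]) = min m (nat av)"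
  by (induction m) auto

lemma cnt_blk:
  assumes "0 \<le> av" "av \<le> int m" "0 \<le> bv" "bv \<le> int m"
  shows "int (cnt (blkA m av) (blkB m bv)) = av * bv"
proof -
  have "cnt (blkA m av) (blkB m bv) = length (filter (\<lambda>j. int j < av) [0..<m]) * length (filter (\<lambda>x. x) (map (\<lambda>k. int k < bv) [0..<m]))"
    unfolding blkA_def blkB_def using cnt_grid[of "map (\<lambda>k. int k < bv) [0..<m]" m "\<lambda>j. int j < av" "[0..<m]"] by simp
  also have "\<dots> = nat av * nat bv"
    using filter_upt_less[of av m] filter_upt_less[of bv m] assms by (simp add: filter_map comp_def)
  finally show ?thesis using assms by simp
qed

lemma cnt_concat:
  assumes "length xs = length ys" "\<And>x. length (A x) = L" "\<And>y. length (B y) = L"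
  shows "cnt (concat (map A xs)) (concat (map B ys)) = (\<Sum>(x, y)\<leftarrow>zip xs ys. cnt (A x) (B y))"
  using assms(1) by (induction xs ys rule: list_induct2) (auto simp: cnt_append assms(2,3))

lemma cnt_encode:
  assumes "length as = length bs" "\<forall>av\<in>set as. 0 \<le> av \<and> av \<le> int m" "\<forall>bv\<in>set bs. 0 \<le> bv \<and> bv \<le> int m"
  shows "int (cnt (concat (map (blkA m) as)) (concat (map (blkB m) bs))) = ip as bs"
  using assms
proof (induction as bs rule: list_induct2)
  case Nil thus ?case by simp
next
  case (Cons av as bv bs)
  have "cnt (concat (map (blkA m) (av # as))) (concat (map (blkB m) (bv # bs)))
      = cnt (blkA m av) (blkB m bv) + cnt (concat (map (blkA m) as)) (concat (map (blkB m) bs))"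
    by (simp add: cnt_append)
  thus ?case using Cons cnt_blk[of av m bv] by simp
qed

lemma cnt_Nil2[simp]: "cnt xs [] = 0" by (simp add: cnt_def)

lemma cnt_rep_False: "cnt (replicate n False) ys = 0"
proof (induction n arbitrary: ys)
  case 0 thus ?case by simp
next
  case (Suc n) thus ?case by (cases ys) auto
qed

lemma ip_to_bits:
  fixes p :: int
  assumes p: "prime p" and k: "Suc t * (nat p - 1) * (nat p - 1) \<le> k"
  shows "cover_num (VV p (Suc t)) (VV p (Suc t)) (\<lambda>av bv. p dvd ip av bv)
       \<le> cover_num (BITS k) (BITS k) (\<lambda>us vs. p dvd int (cnt us vs))"
proof -
  define m where "m = nat p - 1"
  have p1: "p > 1" using prime_gt_1_int[OF p] .
  have pm: "p = int m + 1" unfolding m_def using p1 by simp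
  define pad where "pad = k - Suc t * m * m"
  define eA where "eA as = concat (map (blkA m) as) @ replicate pad False" for as
  define eB where "eB bs = concat (map (blkB m) bs) @ replicate pad False" for bs
  define N where "N = Suc t * m * m"
  have Nk: "N \<le> k" using k unfolding N_def m_def .
  have lenA: "length (concat (map (blkA m) as)) = N" if "length as = Suc t" for as
    using length_concat_const[of "blkA m" "m * m" as] that unfolding N_def by (simp add: algebra_simps)
  have lenB: "length (concat (map (blkB m) as)) = N" if "length as = Suc t" for as
    using length_concat_const[of "blkB m" "m * m" as] that unfolding N_def by (simp add: algebra_simps)
  show ?thesis
  proof (rule cover_reduction[OF BITS_finite BITS_finite])
    fix x assume "x \<in> VV p (Suc t)"
    hence "length x = Suc t" by (simp add: VV_def)
    thus "eA x \<in> BITS k" unfolding eA_def BITS_def pad_def using lenA[of x] Nk unfolding N_def by simp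
  next
    fix y assume "y \<in> VV p (Suc t)"
    hence "length y = Suc t" by (simp add: VV_def)
    thus "eB y \<in> BITS k" unfolding eB_def BITS_def pad_def using lenB[of y] Nk unfolding N_def by simp
  next
    fix x y assume xy: "x \<in> VV p (Suc t)" "y \<in> VV p (Suc t)"
    have len: "length x = Suc t" "length y = Suc t" using xy by (simp_all add: VV_def)
    have rx: "\<forall>av\<in>set x. 0 \<le> av \<and> av \<le> int m" using xy pm by (auto simp: VV_def)
    have ry: "\<forall>av\<in>set y. 0 \<le> av \<and> av \<le> int m" using xy pm by (auto simp: VV_def)
    have "cnt (eA x) (eB y) = cnt (concat (map (blkA m) x)) (concat (map (blkB m) y)) + cnt (replicate pad False) (replicate pad False)"
      unfolding eA_def eB_def using lenA[of x] lenB[of y] len by (simp add: cnt_append)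
    hence "int (cnt (eA x) (eB y)) = ip x y" using cnt_encode[of x y m] len rx ry cnt_rep_False by simp
    thus "(p dvd int (cnt (eA x) (eB y))) = (p dvd ip x y)" by simp
  qed
qed





definition gadget :: "'m omonoid \<Rightarrow> 'm set \<Rightarrow> (nat \<Rightarrow> bool) \<Rightarrow> nat \<Rightarrow> (bool \<Rightarrow> 'm list) \<Rightarrow> (bool \<Rightarrow> 'm list) \<Rightarrow> bool" where
  "gadget M I P L A B \<longleftrightarrow> order_ideal M I \<and> L > 0 \<and>
     (\<forall>u. length (A u) = L \<and> length (B u) = L \<and> set (A u) \<subseteq> carrier M \<and> set (B u) \<subseteq> carrier M) \<and>
     (\<forall>ps. ps \<noteq> [] \<longrightarrow> (lprod M (concat (map (\<lambda>(u, v). interleave (A u) (B v)) ps)) \<in> I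
          \<longleftrightarrow> P (length (filter (\<lambda>(u, v). u \<and> v) ps))))"

lemma inputs_finite: "finite (carrier M) \<Longrightarrow> finite (inputs M n)"
proof -
  assume f: "finite (carrier M)"
  have "inputs M n = {xs. set xs \<subseteq> carrier M \<and> length xs = n}" unfolding inputs_def by auto
  thus ?thesis using finite_lists_length_eq[OF f] by simp
qed

lemma lprod_all_unit: "ordered_monoid M \<Longrightarrow> set xs \<subseteq> {unit M} \<Longrightarrow> lprod M xs = unit M"
proof (induction xs)
  case Nil thus ?case by (simp add: lprod_def)
next
  case (Cons x xs)
  hence "lprod M (x # xs) = mult M (unit M) (unit M)" by (simp add: lprod_def)
  thus ?case using om_lunit[OF Cons.prems(1) om_unit[OF Cons.prems(1)]] by simp
qed

lemma gadget_reduction: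
  assumes OM: "ordered_monoid M" and fin: "finite (carrier M)"
    and G: "gadget M I P L A B" and k: "0 < k" "k * L \<le> n"
  shows "cover_num (BITS k) (BITS k) (\<lambda>us vs. P (cnt us vs))
       \<le> cover_num (inputs M n) (inputs M n) (\<lambda>xs ys. lprod M (interleave xs ys) \<in> I)"
proof -
  have lenA: "\<And>u. length (A u) = L" and lenB: "\<And>u. length (B u) = L"
    and setA: "\<And>u. set (A u) \<subseteq> carrier M" and setB: "\<And>u. set (B u) \<subseteq> carrier M"
    using G unfolding gadget_def by blast+
  have GP: "\<And>ps. ps \<noteq> [] \<Longrightarrow> (lprod M (concat (map (\<lambda>(u, v). interleave (A u) (B v)) ps)) \<in> I
          \<longleftrightarrow> P (length (filter (\<lambda>(u, v). u \<and> v) ps)))"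
    using G unfolding gadget_def by blast
  define pad where "pad = replicate (n - k * L) (unit M)"
  define eA where "eA us = concat (map A us) @ pad" for us
  define eB where "eB vs = concat (map B vs) @ pad" for vs
  have lA: "length (concat (map A us)) = length us * L" for us by (rule length_concat_const[OF lenA])
  have lB: "length (concat (map B us)) = length us * L" for us by (rule length_concat_const[OF lenB])
  have sA: "set (concat (map A us)) \<subseteq> carrier M" for us using setA by auto
  have sB: "set (concat (map B us)) \<subseteq> carrier M" for us using setB by auto
  have spad: "set pad \<subseteq> {unit M}" unfolding pad_def by auto
  show ?thesis
  proof (rule cover_reduction[OF inputs_finite[OF fin] inputs_finite[OF fin]])
    fix x assume "x \<in> BITS k"
    hence "length x = k" by (simp add: BITS_def)
    thus "eA x \<in> inputs M n" unfolding eA_def inputs_def pad_def using lA[of x] sA[of x] om_unit[OF OM] k by auto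
  next
    fix x assume "x \<in> BITS k"
    hence "length x = k" by (simp add: BITS_def)
    thus "eB x \<in> inputs M n" unfolding eB_def inputs_def pad_def using lB[of x] sB[of x] om_unit[OF OM] k by auto
  next
    fix us vs assume uv: "us \<in> BITS k" "vs \<in> BITS k"
    have len: "length us = k" "length vs = k" using uv by (simp_all add: BITS_def)
    define blocks where "blocks = concat (map (\<lambda>(u, v). interleave (A u) (B v)) (zip us vs))"
    have "interleave (eA us) (eB vs) = interleave (concat (map A us)) (concat (map B vs)) @ interleave pad pad"
      unfolding eA_def eB_def using lA[of us] lB[of vs] len by (simp add: interleave_append)
    also have "interleave (concat (map A us)) (concat (map B vs)) = blocks"
      unfolding blocks_def using interleave_concat_map[of us vs A L B] len lenA lenB by simp
    finally have e: "interleave (eA us) (eB vs) = blocks @ interleave pad pad" .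
    have sbl: "set blocks \<subseteq> carrier M" unfolding blocks_def using setA setB
      by (auto dest!: set_zip_leftD set_zip_rightD subsetD[OF interleave_set])
    have spp: "set (interleave pad pad) \<subseteq> {unit M}" using interleave_set[of pad pad] spad by blast
    hence spp': "set (interleave pad pad) \<subseteq> carrier M" using om_unit[OF OM] by blast
    have "lprod M (interleave (eA us) (eB vs)) = mult M (lprod M blocks) (lprod M (interleave pad pad))"
      unfolding e by (rule lprod_append[OF OM sbl spp'])
    also have "\<dots> = lprod M blocks"
      using lprod_all_unit[OF OM spp] om_runit[OF OM lprod_closed[OF OM sbl]] by simp
    finally have e2: "lprod M (interleave (eA us) (eB vs)) = lprod M blocks" .
    have ne: "zip us vs \<noteq> []" using len k by (cases us; cases vs) auto
    show "(lprod M (interleave (eA us) (eB vs)) \<in> I) = P (cnt us vs)"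
      unfolding e2 blocks_def cnt_def using GP[OF ne] .
  qed
qed

lemma N1_mon_ge:
  assumes OM: "ordered_monoid M" and fin: "finite (carrier M)" and I: "order_ideal M I"
    and c: "1 \<le> c" "c \<le> cover_num (inputs M n) (inputs M n) (\<lambda>xs ys. lprod M (interleave xs ys) \<in> I)"
  shows "log 2 (real c) \<le> N1_mon M n"
proof -
  have finI: "finite {I. order_ideal M I}"
    by (rule finite_subset[of _ "Pow (carrier M)"]) (use fin in \<open>auto simp: order_ideal_def\<close>)
  have "log 2 (real c) \<le> N1_ideal M I n"
    unfolding N1_ideal_def N1_def using c by simp
  also have "\<dots> \<le> N1_mon M n" unfolding N1_mon_def
    by (rule Max_ge) (use finI I in auto)
  finally show ?thesis .
qed

lemma omega_lemma:
  fixes f :: "nat \<Rightarrow> real"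
  assumes K: "K > 0" and D: "D \<ge> 0" and lb: "\<And>n. n \<ge> N0 \<Longrightarrow> f n \<ge> real (n div K) - D"
  shows "f \<in> \<Omega>(\<lambda>n. real n)"
proof -
  define c where "c = 1 / (2 * real K)"
  have c0: "c > 0" unfolding c_def using K by simp
  have ev: "eventually (\<lambda>n. norm (f n) \<ge> c * norm (real n)) at_top"
    unfolding eventually_at_top_linorder
  proof (intro exI allI impI)
    fix n assume n: "n \<ge> max N0 (nat \<lceil>2 * real K * (D + 1)\<rceil>)"
    have "real n < real K * (real (n div K) + 1)"
    proof -
      have "n = K * (n div K) + n mod K" by simp
      moreover have "n mod K < K" using K by simp
      moreover have "K * (n div K + 1) = K * (n div K) + K" by (simp add: algebra_simps)
      ultimately have "n < K * (n div K + 1)" by linarith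
      hence "real n < real (K * (n div K + 1))" by linarith
      thus ?thesis by (simp add: algebra_simps)
    qed
    hence q: "real (n div K) > real n / real K - 1" using K by (simp add: field_simps)
    have n2: "real n \<ge> 2 * real K * (D + 1)" using n by linarith
    have "f n \<ge> real n / real K - 1 - D" using lb[of n] n q by linarith
    also have "real n / real K - 1 - D \<ge> c * real n"
    proof -
      have "real n / real K - c * real n = real n / (2 * real K)" unfolding c_def using K by (simp add: field_simps)
      also have "\<dots> \<ge> D + 1" using n2 K by (simp add: field_simps)
      finally show ?thesis by linarith
    qed
    finally have "f n \<ge> c * real n" .
    moreover have "c * real n \<ge> 0" using c0 by simp
    ultimately show "norm (f n) \<ge> c * norm (real n)" by simp
  qed
  show ?thesis unfolding bigomega_def using c0 ev by blast
qed





lemma gadget_omega_disj: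
  assumes OM: "ordered_monoid M" and fin: "finite (carrier M)"
    and G: "gadget M I (\<lambda>c. c = 0) L A B"
  shows "N1_mon M \<in> \<Omega>(\<lambda>n. real n)"
proof -
  have L: "L > 0" and I: "order_ideal M I" using G unfolding gadget_def by auto
  show ?thesis
  proof (rule omega_lemma[OF L order.refl])
    fix n assume n: "n \<ge> L"
    define k where "k = n div L"
    have k: "0 < k" "k * L \<le> n" unfolding k_def using n L by (auto simp: div_greater_zero_iff)
    have "2 ^ k \<le> cover_num (BITS k) (BITS k) (\<lambda>us vs. cnt us vs = 0)" by (rule disj_bound)
    also have "\<dots> \<le> cover_num (inputs M n) (inputs M n) (\<lambda>xs ys. lprod M (interleave xs ys) \<in> I)"
      using gadget_reduction[OF OM fin G k] by simp
    finally have "log 2 (real ((2::nat) ^ k)) \<le> N1_mon M n"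
      by (intro N1_mon_ge[OF OM fin I]) auto
    thus "real (n div L) - 0 \<le> N1_mon M n" unfolding k_def by (simp add: log_pow_cancel)
  qed
qed

lemma gadget_omega_ip:
  assumes OM: "ordered_monoid M" and fin: "finite (carrier M)" and p: "prime (p::nat)"
    and G: "gadget M I (\<lambda>c. p dvd c) L A B"
  shows "N1_mon M \<in> \<Omega>(\<lambda>n. real n)"
proof -
  have L: "L > 0" and I: "order_ideal M I" using G unfolding gadget_def by auto
  have p2: "p \<ge> 2" using prime_ge_2_nat[OF p] .
  define K where "K = L * (p - 1) * (p - 1)"
  have K: "K > 0" unfolding K_def using L p2 by simp
  have pi: "prime (int p)" using p prime_nat_int_transfer by blast
  show ?thesis
  proof (rule omega_lemma[OF K, of 2 "2 * K"])
    fix n assume n: "n \<ge> 2 * K"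
    define t where "t = n div K"
    have t2: "t \<ge> 2" unfolding t_def using n K
      by (metis div_le_mono nonzero_mult_div_cancel_right not_gr0)
    define k where "k = t * (p - 1) * (p - 1)"
    have k: "0 < k" "k * L \<le> n"
    proof -
      show "0 < k" unfolding k_def using t2 p2 by simp
      have "k * L = t * K" unfolding k_def K_def by (simp add: algebra_simps)
      also have "\<dots> \<le> n" unfolding t_def by (simp add: mult.commute)
      finally show "k * L \<le> n" .
    qed
    have np: "nat (int p) = p" by simp
    have "p ^ (t - 1 - 1) \<le> cover_num (VV (int p) (Suc (t - 1))) (VV (int p) (Suc (t - 1))) (\<lambda>a b. int p dvd ip a b)"
      using ip_cover_lower[OF pi, of "t - 1"] by simp
    also have "\<dots> \<le> cover_num (BITS k) (BITS k) (\<lambda>us vs. int p dvd int (cnt us vs))"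
      by (rule ip_to_bits[OF pi]) (use t2 in \<open>simp add: k_def\<close>)
    also have "\<dots> = cover_num (BITS k) (BITS k) (\<lambda>us vs. p dvd cnt us vs)"
      by (simp add: int_dvd_int_iff)
    also have "\<dots> \<le> cover_num (inputs M n) (inputs M n) (\<lambda>xs ys. lprod M (interleave xs ys) \<in> I)"
      using gadget_reduction[OF OM fin G k] by simp
    finally have c: "p ^ (t - 2) \<le> cover_num (inputs M n) (inputs M n) (\<lambda>xs ys. lprod M (interleave xs ys) \<in> I)"
      by (simp add: diff_diff_left numeral_2_eq_2)
    have "log 2 (real (p ^ (t - 2))) \<le> N1_mon M n"
      by (rule N1_mon_ge[OF OM fin I _ c]) (use p2 in simp)
    moreover have "log 2 (real (2 ^ (t - 2))) \<le> log 2 (real (p ^ (t - 2)))"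
      by (rule log_mono) (use p2 in \<open>auto intro: power_mono\<close>)
    moreover have "log 2 (real ((2::nat) ^ (t - 2))) = real (t - 2)" by (simp add: log_pow_cancel)
    ultimately have "real (t - 2) \<le> N1_mon M n" by simp
    thus "real (n div K) - 2 \<le> N1_mon M n" unfolding t_def using t2 t_def by linarith
  qed simp
qed

section \<open>Division lifting\<close>

lemma gadgetD:
  assumes "gadget M I P L A B"
  shows "order_ideal M I" "L > 0"
    "\<forall>u. length (A u) = L \<and> length (B u) = L \<and> set (A u) \<subseteq> carrier M \<and> set (B u) \<subseteq> carrier M"
    "\<forall>ps. ps \<noteq> [] \<longrightarrow> (lprod M (concat (map (\<lambda>(u, v). interleave (A u) (B v)) ps)) \<in> I
          \<longleftrightarrow> P (length (filter (\<lambda>(u, v). u \<and> v) ps)))"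
  by (insert assms, unfold gadget_def, (elim conjE, assumption)+)

lemma gadget_divides:
  assumes OM: "ordered_monoid M" and D: "odivides N M" and G: "gadget N I P L A B"
  shows "\<exists>I' A' B'. gadget M I' P L A' B'"
proof -
  obtain S h where S: "S \<subseteq> carrier M" "unit M \<in> S" "\<forall>x\<in>S. \<forall>y\<in>S. mult M x y \<in> S"
    "h ` S = carrier N" "h (unit M) = unit N" "\<forall>x\<in>S. \<forall>y\<in>S. h (mult M x y) = mult N (h x) (h y)"
    "\<forall>x\<in>S. \<forall>y\<in>S. le M x y \<longrightarrow> le N (h x) (h y)"
    using D unfolding odivides_def by (elim exE conjE) blast
  have I: "order_ideal N I" and L: "L > 0"
    and lenA: "\<And>u. length (A u) = L" and lenB: "\<And>u. length (B u) = L"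
    and setA: "\<And>u. set (A u) \<subseteq> carrier N" and setB: "\<And>u. set (B u) \<subseteq> carrier N"
    and GP: "\<And>ps. ps \<noteq> [] \<Longrightarrow> (lprod N (concat (map (\<lambda>(u, v). interleave (A u) (B v)) ps)) \<in> I
          \<longleftrightarrow> P (length (filter (\<lambda>(u, v). u \<and> v) ps)))"
    using gadgetD[OF G] by blast+
  define g where "g y = (SOME x. x \<in> S \<and> h x = y)" for y
  have g: "g y \<in> S \<and> h (g y) = y" if "y \<in> carrier N" for y
  proof -
    have "y \<in> h ` S" using that S(4) by simp
    hence "\<exists>x. x \<in> S \<and> h x = y" by (elim imageE) blast
    thus ?thesis unfolding g_def by (rule someI_ex)
  qed
  define A' where "A' u = map g (A u)" for u
  define B' where "B' u = map g (B u)" for u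
  define I' where "I' = {m \<in> carrier M. \<exists>s\<in>S. le M m s \<and> h s \<in> I}"
  have lS: "lprod M xs \<in> S" if "set xs \<subseteq> S" for xs
    using that
  proof (induction xs)
    case Nil thus ?case by (simp add: lprod_def S(2))
  next
    case (Cons x xs)
    hence "x \<in> S" "lprod M xs \<in> S" by simp_all
    hence "mult M x (lprod M xs) \<in> S" using S(3) by blast
    thus ?case by (simp add: lprod_def)
  qed
  have lh: "h (lprod M xs) = lprod N (map h xs)" if "set xs \<subseteq> S" for xs
    using that
  proof (induction xs)
    case Nil thus ?case by (simp add: lprod_def S(5))
  next
    case (Cons x xs)
    hence "x \<in> S" "lprod M xs \<in> S" using lS by auto
    hence "h (lprod M (x # xs)) = mult N (h x) (h (lprod M xs))" using S(6) by (simp add: lprod_def)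
    thus ?case using Cons by (simp add: lprod_def)
  qed
  have setA': "set (A' u) \<subseteq> S" for u unfolding A'_def using g setA by auto
  have setB': "set (B' u) \<subseteq> S" for u unfolding B'_def using g setB by auto
  have hA: "map h (A' u) = A u" for u unfolding A'_def map_map
  proof (rule map_idI)
    fix x assume "x \<in> set (A u)" hence "x \<in> carrier N" using setA by blast
    thus "(h \<circ> g) x = x" using g by simp
  qed
  have hB: "map h (B' u) = B u" for u unfolding B'_def map_map
  proof (rule map_idI)
    fix x assume "x \<in> set (B u)" hence "x \<in> carrier N" using setB by blast
    thus "(h \<circ> g) x = x" using g by simp
  qed
  have lA': "length (A' u) = L" and lB': "length (B' u) = L" for u
    unfolding A'_def B'_def using lenA lenB by simp_all
  have hI: "map h (interleave (A' u) (B' v)) = interleave (A u) (B v)" for u v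
    using interleave_map[of "A' u" "B' v" h] lA' lB' hA hB by simp
  have sI: "set (interleave (A' u) (B' v)) \<subseteq> S" for u v
    using interleave_set[of "A' u" "B' v"] setA' setB' by blast
  have "gadget M I' P L A' B'"
    unfolding gadget_def
  proof (intro conjI allI impI)
    show "order_ideal M I'" unfolding order_ideal_def
    proof (intro conjI ballI impI)
      show "I' \<subseteq> carrier M" unfolding I'_def by blast
      fix x y assume xy: "x \<in> carrier M" "y \<in> I'" "le M x y"
      then obtain s where s: "s \<in> S" "le M y s" "h s \<in> I" "y \<in> carrier M" unfolding I'_def by blast
      have "le M x s" using om_trans[OF OM xy(1) s(4) _ xy(3) s(2)] s(1) S(1) by blast
      thus "x \<in> I'" unfolding I'_def using xy(1) s by blast
    qed
    show "0 < L" by (rule L)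
    fix u
    show "length (A' u) = L" "length (B' u) = L" unfolding A'_def B'_def using lenA lenB by simp_all
    show "set (A' u) \<subseteq> carrier M" "set (B' u) \<subseteq> carrier M" using setA' setB' S(1) by blast+
  next
    fix ps :: "(bool \<times> bool) list" assume ne: "ps \<noteq> []"
    define xs where "xs = concat (map (\<lambda>(u, v). interleave (A' u) (B' v)) ps)"
    have sx: "set xs \<subseteq> S"
    proof
      fix z assume "z \<in> set xs"
      then obtain uv where "uv \<in> set ps" "z \<in> set (interleave (A' (fst uv)) (B' (snd uv)))"
        unfolding xs_def by (auto simp: split_def)
      thus "z \<in> S" using sI by blast
    qed
    have E: "map (map h \<circ> (\<lambda>(u, v). interleave (A' u) (B' v))) ps = map (\<lambda>(u, v). interleave (A u) (B v)) ps"
      by (simp add: split_def hI comp_def)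
    have "map h xs = concat (map (\<lambda>(u, v). interleave (A u) (B v)) ps)"
      unfolding xs_def map_concat map_map E ..
    hence hx: "h (lprod M xs) = lprod N (concat (map (\<lambda>(u, v). interleave (A u) (B v)) ps))"
      using lh[OF sx] by simp
    have px: "lprod M xs \<in> S" by (rule lS[OF sx])
    have "lprod M xs \<in> I' \<longleftrightarrow> h (lprod M xs) \<in> I"
    proof
      assume "lprod M xs \<in> I'"
      then obtain s where s: "s \<in> S" "le M (lprod M xs) s" "h s \<in> I" unfolding I'_def by blast
      have "le N (h (lprod M xs)) (h s)" using S(7) px s by blast
      moreover have "h (lprod M xs) \<in> carrier N" using px S(4) by blast
      ultimately show "h (lprod M xs) \<in> I" using I s(3) unfolding order_ideal_def by blast
    next
      assume "h (lprod M xs) \<in> I"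
      moreover have "le M (lprod M xs) (lprod M xs)" using om_refl[OF OM] px S(1) by blast
      ultimately show "lprod M xs \<in> I'" unfolding I'_def using px S(1) by blast
    qed
    thus "(lprod M (concat (map (\<lambda>(u, v). interleave (A' u) (B' v)) ps)) \<in> I') =
          P (length (filter (\<lambda>(u, v). u \<and> v) ps))"
      unfolding xs_def[symmetric] hx using GP[OF ne] by simp
  qed
  thus ?thesis by blast
qed





lemma synle_refl: "synle L x x" unfolding synle_def by simp

lemma synle_trans: "synle L x y \<Longrightarrow> synle L y z \<Longrightarrow> synle L x z" unfolding synle_def by blast

lemma synle_cong: "synle L x y \<Longrightarrow> synle L (w @ x @ z) (w @ y @ z)"
  unfolding synle_def
proof (intro allI impI)
  fix u v assume H: "\<forall>u v. u @ y @ v \<in> L \<longrightarrow> u @ x @ v \<in> L" and "u @ (w @ y @ z) @ v \<in> L"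
  hence "(u @ w) @ y @ (z @ v) \<in> L" by simp
  hence "(u @ w) @ x @ (z @ v) \<in> L" using H by blast
  thus "u @ (w @ x @ z) @ v \<in> L" by simp
qed

lemma synle_L: "synle L x y \<Longrightarrow> y \<in> L \<Longrightarrow> x \<in> L"
  unfolding synle_def by (erule allE[of _ "[]"], erule allE[of _ "[]"]) simp

lemma syneq_refl: "syneq L x x" unfolding syneq_def by (simp add: synle_refl)
lemma syneq_sym: "syneq L x y \<Longrightarrow> syneq L y x" unfolding syneq_def by simp
lemma syneq_trans: "syneq L x y \<Longrightarrow> syneq L y z \<Longrightarrow> syneq L x z"
  unfolding syneq_def using synle_trans by blast

lemma syneq_app: "syneq L x x' \<Longrightarrow> syneq L y y' \<Longrightarrow> syneq L (x @ y) (x' @ y')"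
proof -
  assume H: "syneq L x x'" "syneq L y y'"
  have "syneq L (x @ y) (x' @ y)"
    using H(1) synle_cong[of L x x' "[]" y] synle_cong[of L x' x "[]" y] unfolding syneq_def by simp
  moreover have "syneq L (x' @ y) (x' @ y')"
    using H(2) synle_cong[of L y y' x' "[]"] synle_cong[of L y' y x' "[]"] unfolding syneq_def by simp
  ultimately show ?thesis using syneq_trans by blast
qed

lemma synclass_eq: "synclass L x = synclass L y \<longleftrightarrow> syneq L x y"
proof
  assume "synclass L x = synclass L y"
  moreover have "x \<in> synclass L x" unfolding synclass_def by (simp add: syneq_refl)
  ultimately have "x \<in> synclass L y" by simp
  thus "syneq L x y" unfolding synclass_def by simp
next
  assume H: "syneq L x y"
  show "synclass L x = synclass L y" unfolding synclass_def
    using H syneq_trans syneq_sym by blast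
qed

lemma rep_synclass: "syneq L (rep (synclass L w)) w"
proof -
  have "w \<in> synclass L w" unfolding synclass_def by (simp add: syneq_refl)
  hence "rep (synclass L w) \<in> synclass L w" unfolding rep_def by (rule someI)
  thus ?thesis unfolding synclass_def by simp
qed

lemma synmon_mult: "mult (synmon L) (synclass L x) (synclass L y) = synclass L (x @ y)"
proof -
  have "syneq L (rep (synclass L x) @ rep (synclass L y)) (x @ y)"
    by (rule syneq_app[OF rep_synclass rep_synclass])
  thus ?thesis unfolding synmon_def by (simp add: synclass_eq)
qed

lemma synmon_lprod: "lprod (synmon L) (map (synclass L) ws) = synclass L (concat ws)"
proof (induction ws)
  case Nil thus ?case by (simp add: lprod_def synmon_def)
next
  case (Cons w ws)
  have "lprod (synmon L) (map (synclass L) (w # ws)) = mult (synmon L) (synclass L w) (lprod (synmon L) (map (synclass L) ws))"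
    by (simp add: lprod_def)
  also have "\<dots> = synclass L (w @ concat ws)" using Cons synmon_mult by simp
  finally show ?case by simp
qed

definition synI :: "'c list set \<Rightarrow> 'c list set set" where
  "synI L = {A \<in> carrier (synmon L). rep A \<in> L}"

lemma synI_ideal: "order_ideal (synmon L) (synI L)"
  unfolding order_ideal_def synI_def
proof (intro conjI ballI impI)
  show "{A \<in> carrier (synmon L). rep A \<in> L} \<subseteq> carrier (synmon L)" by blast
  fix x y assume "x \<in> carrier (synmon L)" "y \<in> {A \<in> carrier (synmon L). rep A \<in> L}" "le (synmon L) x y"
  hence "rep y \<in> L" "synle L (rep x) (rep y)" unfolding synmon_def by auto
  hence "rep x \<in> L" using synle_L by blast
  thus "x \<in> {A \<in> carrier (synmon L). rep A \<in> L}" using \<open>x \<in> carrier (synmon L)\<close> by blast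
qed

lemma synclass_in_synI: "synclass L w \<in> synI L \<longleftrightarrow> w \<in> L"
proof -
  have e: "syneq L (rep (synclass L w)) w" by (rule rep_synclass)
  have c: "synclass L w \<in> carrier (synmon L)" unfolding synmon_def by simp
  have "rep (synclass L w) \<in> L \<longleftrightarrow> w \<in> L"
  proof
    assume "rep (synclass L w) \<in> L"
    thus "w \<in> L" using e synle_L unfolding syneq_def by blast
  next
    assume "w \<in> L"
    thus "rep (synclass L w) \<in> L" using e synle_L unfolding syneq_def by blast
  qed
  thus ?thesis unfolding synI_def using c by simp
qed

section \<open>The gadget for languages avoiding aa\<close>

lemma no_aa: "concat (replicate k [a, b]) \<noteq> u @ [a, a] @ v"
proof (induction k arbitrary: u)
  case 0 thus ?case by simp
next
  case (Suc k)
  show ?case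
  proof
    assume H: "concat (replicate (Suc k) [a, b]) = u @ [a, a] @ v"
    hence H': "a # b # concat (replicate k [a, b]) = u @ [a, a] @ v" by simp
    show False
    proof (cases u)
      case Nil thus False using H' by simp
    next
      case (Cons x u1)
      show False
      proof (cases u1)
        case Nil thus False using H' Cons by simp
      next
        case (Cons y u2)
        hence "concat (replicate k [a, b]) = u2 @ [a, a] @ v" using H' \<open>u = x # u1\<close> by simp
        thus False using Suc.IH by blast
      qed
    qed
  qed
qed

definition bw :: "bool \<Rightarrow> bool \<Rightarrow> ab list" where
  "bw u v = (if u then [a] else []) @ (if v then [a] else []) @ (if u then [b] else []) @ (if v then [b] else [])"

definition synA :: "ab list set \<Rightarrow> bool \<Rightarrow> ab list set list" where
  "synA L u = [synclass L (if u then [a] else []), synclass L (if u then [b] else [])]"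

lemma synA_block: "interleave (synA L u) (synA L v) = map (synclass L)
   [if u then [a] else [], if v then [a] else [], if u then [b] else [], if v then [b] else []]"
  by (simp add: interleave_def synA_def)

lemma blocks_word:
  "concat (map (\<lambda>(u, v). interleave (synA L u) (synA L v)) ps) = map (synclass L) (concat (map (\<lambda>(u, v).
    [if u then [a] else [], if v then [a] else [], if u then [b] else [], if v then [b] else []]) ps))"
  by (induction ps) (auto simp: synA_block)

lemma concat_bw: "concat (concat (map (\<lambda>(u, v).
    [if u then [a] else [], if v then [a] else [], if u then [b] else [], if v then [b] else []]) ps))
   = concat (map (\<lambda>(u, v). bw u v) ps)"
  by (induction ps) (auto simp: bw_def)

lemma bw_good: "(True, True) \<notin> set ps \<Longrightarrow> \<exists>k. concat (map (\<lambda>(u, v). bw u v) ps) = concat (replicate k [a, b])"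
proof (induction ps)
  case Nil show ?case by (rule exI[of _ 0]) simp
next
  case (Cons p ps)
  then obtain k where k: "concat (map (\<lambda>(u, v). bw u v) ps) = concat (replicate k [a, b])" by auto
  obtain u v where p: "p = (u, v)" by (cases p)
  have "\<not> (u \<and> v)" using Cons.prems p by auto
  hence "bw u v = [] \<or> bw u v = [a, b]" unfolding bw_def by auto
  thus ?case
  proof
    assume "bw u v = []" thus ?thesis using k p by auto
  next
    assume "bw u v = [a, b]"
    hence "concat (map (\<lambda>(u, v). bw u v) (p # ps)) = concat (replicate (Suc k) [a, b])" using k p by simp
    thus ?thesis by blast
  qed
qed

lemma bw_bad: "(True, True) \<in> set ps \<Longrightarrow> \<exists>x y. concat (map (\<lambda>(u, v). bw u v) ps) = x @ [a, a] @ y"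
proof -
  assume "(True, True) \<in> set ps"
  then obtain ps1 ps2 where "ps = ps1 @ (True, True) # ps2" by (meson split_list)
  hence "concat (map (\<lambda>(u, v). bw u v) ps) = concat (map (\<lambda>(u, v). bw u v) ps1) @ [a, a] @ [b, b] @ concat (map (\<lambda>(u, v). bw u v) ps2)"
    by (simp add: bw_def)
  thus ?thesis by blast
qed

lemma syn_gadget:
  assumes H1: "\<And>k. concat (replicate k [a, b]) \<in> L" and H2: "\<And>x y. x @ [a, a] @ y \<notin> L"
  shows "gadget (synmon L) (synI L) (\<lambda>c. c = 0) 2 (synA L) (synA L)"
  unfolding gadget_def
proof (intro conjI allI impI)
  show "order_ideal (synmon L) (synI L)" by (rule synI_ideal)
  show "0 < (2::nat)" by simp
  fix u
  show "length (synA L u) = 2" "length (synA L u) = 2" by (simp_all add: synA_def)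
  show "set (synA L u) \<subseteq> carrier (synmon L)" "set (synA L u) \<subseteq> carrier (synmon L)"
    by (auto simp: synA_def synmon_def)
next
  fix ps :: "(bool \<times> bool) list"
  have e: "lprod (synmon L) (concat (map (\<lambda>(u, v). interleave (synA L u) (synA L v)) ps))
        = synclass L (concat (map (\<lambda>(u, v). bw u v) ps))"
    unfolding blocks_word synmon_lprod concat_bw ..
  have c: "length (filter (\<lambda>(u, v). u \<and> v) ps) = 0 \<longleftrightarrow> (True, True) \<notin> set ps"
    by (auto simp: filter_empty_conv)
  show "(lprod (synmon L) (concat (map (\<lambda>(u, v). interleave (synA L u) (synA L v)) ps)) \<in> synI L) =
          (length (filter (\<lambda>(u, v). u \<and> v) ps) = 0)"
    unfolding e synclass_in_synI c
  proof
    assume "concat (map (\<lambda>(u, v). bw u v) ps) \<in> L"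
    show "(True, True) \<notin> set ps"
    proof
      assume "(True, True) \<in> set ps"
      then obtain x y where "concat (map (\<lambda>(u, v). bw u v) ps) = x @ [a, a] @ y" using bw_bad by blast
      thus False using H2 \<open>concat (map (\<lambda>(u, v). bw u v) ps) \<in> L\<close> by simp
    qed
  next
    assume "(True, True) \<notin> set ps"
    then obtain k where "concat (map (\<lambda>(u, v). bw u v) ps) = concat (replicate k [a, b])" using bw_good by blast
    thus "concat (map (\<lambda>(u, v). bw u v) ps) \<in> L" using H1 by simp
  qed
qed

lemma BA2_gadget: "gadget BA2_plus (synI L_BA2) (\<lambda>c. c = 0) 2 (synA L_BA2) (synA L_BA2)"
  unfolding BA2_plus_def
proof (rule syn_gadget)
  show "concat (replicate k [a, b]) \<in> L_BA2" for k unfolding L_BA2_def by blast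
  show "x @ [a, a] @ y \<notin> L_BA2" for x y
  proof
    assume "x @ [a, a] @ y \<in> L_BA2"
    then obtain k where "x @ [a, a] @ y = concat (replicate k [a, b])" unfolding L_BA2_def by blast
    thus False using no_aa[of k x y] by simp
  qed
qed

lemma U_gadget: "gadget U_plus (synI L_U) (\<lambda>c. c = 0) 2 (synA L_U) (synA L_U)"
  unfolding U_plus_def
proof (rule syn_gadget)
  show "concat (replicate k [a, b]) \<in> L_U" for k unfolding L_U_def using no_aa[of k] by simp
  show "x @ [a, a] @ y \<notin> L_U" for x y unfolding L_U_def by blast
qed





section \<open>Finite groups\<close>

context
  fixes G :: "'g omonoid"
  assumes OM: "ordered_monoid G" and GR: "is_group G" and FIN: "finite (carrier G)"
begin

lemma g_inv: "x \<in> carrier G \<Longrightarrow> \<exists>y\<in>carrier G. mult G x y = unit G \<and> mult G y x = unit G"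
  using GR unfolding is_group_def by blast

lemma g_cancel:
  assumes "x \<in> carrier G" "y \<in> carrier G" "z \<in> carrier G" "mult G x y = mult G x z"
  shows "y = z"
proof -
  obtain x' where x': "x' \<in> carrier G" "mult G x' x = unit G" using g_inv[OF assms(1)] by blast
  have "y = mult G (mult G x' x) y" using x' om_lunit[OF OM assms(2)] by simp
  also have "\<dots> = mult G x' (mult G x y)" using om_assoc[OF OM x'(1) assms(1,2)] .
  also have "\<dots> = mult G x' (mult G x z)" using assms(4) by simp
  also have "\<dots> = mult G (mult G x' x) z" using om_assoc[OF OM x'(1) assms(1,3)] by simp
  also have "\<dots> = z" using x' om_lunit[OF OM assms(3)] by simp
  finally show ?thesis .
qed

lemma opow_unit: "opow G (unit G) n = unit G"
  by (induction n) (auto simp: om_lunit[OF OM] om_unit[OF OM])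

lemma pow_period:
  assumes z: "z \<in> carrier G"
  shows "\<exists>m>0. opow G z m = unit G"
proof -
  define N where "N = card (carrier G)"
  have "\<not> inj_on (opow G z) {0..N}"
  proof
    assume inj: "inj_on (opow G z) {0..N}"
    have "opow G z ` {0..N} \<subseteq> carrier G" using opow_closed[OF OM z] by blast
    hence "card {0..N} \<le> card (carrier G)" using card_inj_on_le[OF inj _ FIN] by blast
    thus False unfolding N_def by simp
  qed
  then obtain i j where ij: "i \<in> {0..N}" "j \<in> {0..N}" "i \<noteq> j" "opow G z i = opow G z j"
    unfolding inj_on_def by blast
  define lo where "lo = min i j"
  define hi where "hi = max i j"
  have lh: "lo < hi" "opow G z lo = opow G z hi" unfolding lo_def hi_def using ij by (auto simp: min_def max_def)
  have "mult G (opow G z lo) (opow G z (hi - lo)) = opow G z hi"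
    using opow_add[OF OM z, of lo "hi - lo"] lh by simp
  also have "\<dots> = mult G (opow G z lo) (unit G)" using lh om_runit[OF OM opow_closed[OF OM z]] by simp
  finally have "opow G z (hi - lo) = unit G"
    using g_cancel[OF opow_closed[OF OM z] opow_closed[OF OM z] om_unit[OF OM]] by blast
  thus ?thesis using lh by (intro exI[of _ "hi - lo"]) simp
qed

lemma trivial_order:
  assumes x: "x \<in> carrier G" and y: "y \<in> carrier G" and le: "le G x y"
  shows "x = y"
proof -
  obtain y' where y': "y' \<in> carrier G" "mult G y y' = unit G" "mult G y' y = unit G" using g_inv[OF y] by blast
  define z where "z = mult G x y'"
  have zc: "z \<in> carrier G" unfolding z_def using om_closed[OF OM x y'(1)] .
  have z1: "le G z (unit G)" unfolding z_def using om_monoR[OF OM x y y'(1) le] y' by simp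
  have zpow: "le G (opow G z (Suc j)) z" for j
  proof (induction j)
    case 0 thus ?case using om_refl[OF OM zc] om_runit[OF OM zc] by simp
  next
    case (Suc j)
    have c: "opow G z (Suc j) \<in> carrier G" using opow_closed[OF OM zc] .
    have "opow G z (Suc (Suc j)) = mult G (opow G z (Suc j)) z" by (rule opow_Suc2[OF OM zc])
    moreover have "le G (mult G (opow G z (Suc j)) z) (mult G (opow G z (Suc j)) (unit G))"
      by (rule om_monoL[OF OM zc om_unit[OF OM] c z1])
    moreover have "mult G (opow G z (Suc j)) (unit G) = opow G z (Suc j)" using om_runit[OF OM c] .
    ultimately have "le G (opow G z (Suc (Suc j))) (opow G z (Suc j))" by simp
    thus ?case using om_trans[OF OM opow_closed[OF OM zc] c zc _ Suc.IH] by blast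
  qed
  obtain m where m: "m > 0" "opow G z m = unit G" using pow_period[OF zc] by blast
  have "le G (unit G) z" using zpow[of "m - 1"] m by simp
  hence z1': "z = unit G" using om_antisym[OF OM zc om_unit[OF OM] z1] by simp
  have "x = mult G x (mult G y' y)" using y' om_runit[OF OM x] by simp
  also have "\<dots> = mult G z y" unfolding z_def using om_assoc[OF OM x y'(1) y] by simp
  also have "\<dots> = y" using z1' om_lunit[OF OM y] by simp
  finally show ?thesis .
qed

lemma opow_ext_period:
  assumes z: "z \<in> carrier G" and m: "m > 0" "opow G z m = unit G"
    and minm: "\<And>k. 0 < k \<Longrightarrow> k < m \<Longrightarrow> opow G z k \<noteq> unit G"
  shows "opow G z k = unit G \<longleftrightarrow> m dvd k"
proof
  assume "m dvd k"
  then obtain q where "k = m * q" by blast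
  thus "opow G z k = unit G" using opow_mult[OF OM z, of m q] m opow_unit by simp
next
  assume k: "opow G z k = unit G"
  have "opow G z k = mult G (opow G z (m * (k div m))) (opow G z (k mod m))"
    using opow_add[OF OM z, of "m * (k div m)" "k mod m"] by simp
  also have "opow G z (m * (k div m)) = unit G" using opow_mult[OF OM z, of m "k div m"] m opow_unit by simp
  finally have "opow G z (k mod m) = unit G" using k om_lunit[OF OM opow_closed[OF OM z]] by simp
  hence "k mod m = 0" using minm[of "k mod m"] m by (cases "k mod m = 0") auto
  thus "m dvd k" by auto
qed

lemma lprod_4: "x1 \<in> carrier G \<Longrightarrow> x2 \<in> carrier G \<Longrightarrow> x3 \<in> carrier G \<Longrightarrow> x4 \<in> carrier G \<Longrightarrow>
   lprod G [x1, x2, x3, x4] = mult G x1 (mult G x2 (mult G x3 x4))"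
  by (simp add: lprod_def om_runit[OF OM])

lemma group_gadget:
  assumes NC: "noncommutative G"
  shows "\<exists>p L A B. prime p \<and> gadget G {unit G} (\<lambda>c. p dvd c) L A B"
proof -
  obtain x y where xy: "x \<in> carrier G" "y \<in> carrier G" "mult G x y \<noteq> mult G y x"
    using NC unfolding noncommutative_def by blast
  obtain x' where x': "x' \<in> carrier G" "mult G x x' = unit G" "mult G x' x = unit G" using g_inv[OF xy(1)] by blast
  obtain y' where y': "y' \<in> carrier G" "mult G y y' = unit G" "mult G y' y = unit G" using g_inv[OF xy(2)] by blast
  have U: "unit G \<in> carrier G" by (rule om_unit[OF OM])
  define c where "c = lprod G [x, y, x', y']"
  have cc: "c \<in> carrier G" unfolding c_def by (rule lprod_closed[OF OM]) (use xy x' y' in auto)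
  have c_ne: "c \<noteq> unit G"
  proof
    assume c1: "c = unit G"
    have yx: "mult G y x \<in> carrier G" using om_closed[OF OM xy(2) xy(1)] .
    have "mult G c (mult G y x) = mult G x (mult G y (mult G x' (mult G y' (mult G y x))))"
      unfolding c_def using lprod_4[OF xy(1,2) x'(1) y'(1)]
      by (simp add: om_assoc[OF OM] om_closed[OF OM] xy x' y')
    also have "mult G y' (mult G y x) = x" using om_assoc[OF OM y'(1) xy(2) xy(1)] y'(3) om_lunit[OF OM xy(1)] by simp
    also have "mult G x' x = unit G" by (rule x'(3))
    finally have "mult G c (mult G y x) = mult G x y" using om_runit[OF OM xy(2)] by simp
    thus False using c1 om_lunit[OF OM yx] xy(3) by simp
  qed
  define Pm where "Pm m = (m > 0 \<and> opow G c m = unit G)" for m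
  have exm: "\<exists>m. Pm m" using pow_period[OF cc] unfolding Pm_def by blast
  define m where "m = (LEAST m. Pm m)"
  have m: "m > 0" "opow G c m = unit G" using LeastI_ex[OF exm] unfolding m_def Pm_def by auto
  have minm: "opow G c k \<noteq> unit G" if "0 < k" "k < m" for k
    using not_less_Least[of k Pm] that unfolding m_def Pm_def by blast
  have per: "opow G c k = unit G \<longleftrightarrow> m dvd k" for k by (rule opow_ext_period[OF cc m minm])
  have m1: "m \<noteq> 1" using m c_ne om_runit[OF OM cc] by auto
  obtain p where p: "prime p" "p dvd m" using prime_factor_nat[OF m1] by blast
  define r where "r = m div p"
  have r0: "r > 0" unfolding r_def using p m by (metis dvd_div_eq_0_iff less_numeral_extra(3) not_gr0 prime_gt_0_nat)
  have mr: "m = p * r" unfolding r_def using p by simp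
  define g where "g = opow G c r"
  have gc: "g \<in> carrier G" unfolding g_def by (rule opow_closed[OF OM cc])
  have gper: "opow G g k = unit G \<longleftrightarrow> p dvd k" for k
  proof -
    have "opow G g k = opow G c (r * k)" unfolding g_def using opow_mult[OF OM cc] by simp
    hence "opow G g k = unit G \<longleftrightarrow> p * r dvd r * k" using per mr by simp
    also have "\<dots> \<longleftrightarrow> p dvd k" using r0 by (simp add: mult.commute)
    finally show ?thesis .
  qed
  define X where "X u = (if u then x else unit G)" for u
  define X' where "X' u = (if u then x' else unit G)" for u
  define Y where "Y u = (if u then y else unit G)" for u
  define Y' where "Y' u = (if u then y' else unit G)" for u
  have XC: "X u \<in> carrier G" "X' u \<in> carrier G" "Y u \<in> carrier G" "Y' u \<in> carrier G" for u
    unfolding X_def X'_def Y_def Y'_def using xy x' y' U by auto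
  define A where "A u = concat (replicate r [X u, X' u])" for u
  define B where "B u = concat (replicate r [Y u, Y' u])" for u
  have blk: "lprod G [X u, Y v, X' u, Y' v] = (if u \<and> v then c else unit G)" for u v
  proof (cases u; cases v)
    assume "u" "v" thus ?thesis unfolding c_def X_def Y_def X'_def Y'_def by simp
  next
    assume "u" "\<not> v" thus ?thesis unfolding X_def Y_def X'_def Y'_def
      using lprod_4[OF xy(1) U x'(1) U] om_lunit[OF OM x'(1)] om_lunit[OF OM U] x'(2) om_runit[OF OM x'(1)] by simp
  next
    assume "\<not> u" "v" thus ?thesis unfolding X_def Y_def X'_def Y'_def
      using lprod_4[OF U xy(2) U y'(1)] om_lunit[OF OM y'(1)] om_lunit[OF OM U] y'(2)
        om_lunit[OF OM om_closed[OF OM xy(2) y'(1)]] by simp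
  next
    assume "\<not> u" "\<not> v" thus ?thesis unfolding X_def Y_def X'_def Y'_def
      using lprod_4[OF U U U U] om_lunit[OF OM U] by simp
  qed
  have blkp: "lprod G (interleave (A u) (B v)) = (if u \<and> v then g else unit G)" for u v
  proof -
    have "interleave (A u) (B v) = concat (replicate r [X u, Y v, X' u, Y' v])"
    proof -
      have "interleave [X u, X' u] [Y v, Y' v] = [X u, Y v, X' u, Y' v]" by (simp add: interleave_def)
      thus ?thesis unfolding A_def B_def using interleave_replicate[of "[X u, X' u]" "[Y v, Y' v]" r] by simp
    qed
    hence "lprod G (interleave (A u) (B v)) = opow G (lprod G [X u, Y v, X' u, Y' v]) r"
      using lprod_concat_replicate[OF OM, of "[X u, Y v, X' u, Y' v]" r] XC by simp
    thus ?thesis using blk g_def opow_unit by simp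
  qed
  have sA: "set (A u) \<subseteq> carrier G" for u unfolding A_def using XC by (cases "r = 0") auto
  have sB: "set (B u) \<subseteq> carrier G" for u unfolding B_def using XC by (cases "r = 0") auto
  have setI: "set (interleave (A u) (B v)) \<subseteq> carrier G" for u v
    using interleave_set[of "A u" "B v"] sA[of u] sB[of v] by blast
  have tot: "lprod G (concat (map (\<lambda>(u, v). interleave (A u) (B v)) ps)) = opow G g (length (filter (\<lambda>(u, v). u \<and> v) ps))" for ps
  proof (induction ps)
    case Nil thus ?case by (simp add: lprod_def)
  next
    case (Cons q ps)
    obtain u v where q: "q = (u, v)" by (cases q)
    have s2: "set (concat (map (\<lambda>(u, v). interleave (A u) (B v)) ps)) \<subseteq> carrier G"
      using setI by auto
    have "lprod G (concat (map (\<lambda>(u, v). interleave (A u) (B v)) (q # ps)))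
       = mult G (lprod G (interleave (A u) (B v))) (lprod G (concat (map (\<lambda>(u, v). interleave (A u) (B v)) ps)))"
      unfolding q using lprod_append[OF OM setI s2] by simp
    also have "\<dots> = mult G (if u \<and> v then g else unit G) (opow G g (length (filter (\<lambda>(u, v). u \<and> v) ps)))"
      using Cons blkp by simp
    also have "\<dots> = opow G g (length (filter (\<lambda>(u, v). u \<and> v) (q # ps)))"
      unfolding q using om_lunit[OF OM opow_closed[OF OM gc]] by simp
    finally show ?case .
  qed
  have "gadget G {unit G} (\<lambda>c. p dvd c) (2 * r) A B"
    unfolding gadget_def
  proof (intro conjI allI impI)
    show "order_ideal G {unit G}" unfolding order_ideal_def using U trivial_order[OF _ U] by blast
    show "0 < 2 * r" using r0 by simp
    fix u
    show "length (A u) = 2 * r" "length (B u) = 2 * r"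
      unfolding A_def B_def by (simp_all add: length_concat_replicate)
    show "set (A u) \<subseteq> carrier G" "set (B u) \<subseteq> carrier G" using sA sB by blast+
  next
    fix ps :: "(bool \<times> bool) list"
    show "(lprod G (concat (map (\<lambda>(u, v). interleave (A u) (B v)) ps)) \<in> {unit G}) =
          (p dvd length (filter (\<lambda>(u, v). u \<and> v) ps))"
      unfolding tot using gper by simp
  qed
  thus ?thesis using p by blast
qed

end





section \<open>T_q monoids\<close>

context
  fixes M :: "'m omonoid" and e f :: 'm and q :: nat
  assumes OM: "ordered_monoid M" and ec: "e \<in> carrier M" and fc: "f \<in> carrier M"
    and ee: "mult M e e = e" and ff: "mult M f f = f"
    and qe: "mult M (opow M (mult M e f) q) e = e"
    and qn: "\<And>r. r > 0 \<Longrightarrow> \<not> q dvd r \<Longrightarrow> mult M (opow M (mult M e f) r) e \<noteq> e"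
    and q1: "q > 1"
begin

abbreviation "phi \<equiv> mult M e f"
definition EE :: "nat \<Rightarrow> 'm" where "EE k = mult M (opow M phi k) e"

lemma phic: "phi \<in> carrier M" using om_closed[OF OM ec fc] .
lemma powc: "opow M phi k \<in> carrier M" using opow_closed[OF OM phic] .
lemma EEc: "EE k \<in> carrier M" unfolding EE_def using om_closed[OF OM powc ec] .
lemma EE0: "EE 0 = e" unfolding EE_def using om_lunit[OF OM ec] by simp

lemma e_phi: "mult M e phi = phi"
  using om_assoc[OF OM ec ec fc] ee by simp

lemma e_pow: "k > 0 \<Longrightarrow> mult M e (opow M phi k) = opow M phi k"
proof (cases k)
  case (Suc j)
  have "mult M e (opow M phi (Suc j)) = mult M (mult M e phi) (opow M phi j)"
    using om_assoc[OF OM ec phic powc] by simp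
  thus ?thesis using Suc e_phi by simp
qed simp

lemma e_EE: "mult M e (EE k) = EE k"
proof (cases "k = 0")
  case True thus ?thesis using EE0 ee by simp
next
  case False
  have "mult M e (EE k) = mult M (mult M e (opow M phi k)) e"
    unfolding EE_def using om_assoc[OF OM ec powc ec] by simp
  thus ?thesis using e_pow False unfolding EE_def by simp
qed

lemma EE_e: "mult M (EE k) e = EE k"
  unfolding EE_def using om_assoc[OF OM powc ec ec] ee by simp

lemma EE_add: "mult M (EE j) (EE k) = EE (j + k)"
proof -
  have "mult M (EE j) (EE k) = mult M (opow M phi j) (mult M e (EE k))"
    unfolding EE_def[of j] using om_assoc[OF OM powc ec EEc] by simp
  also have "\<dots> = mult M (opow M phi j) (EE k)" using e_EE by simp
  also have "\<dots> = mult M (mult M (opow M phi j) (opow M phi k)) e"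
    unfolding EE_def using om_assoc[OF OM powc powc ec] by simp
  also have "\<dots> = EE (j + k)" unfolding EE_def using opow_add[OF OM phic] by simp
  finally show ?thesis .
qed

lemma EE_fe: "mult M (EE k) (mult M f e) = EE (Suc k)"
proof -
  have "mult M (EE k) (mult M f e) = mult M (opow M phi k) (mult M e (mult M f e))"
    unfolding EE_def using om_assoc[OF OM powc ec om_closed[OF OM fc ec]] by simp
  also have "mult M e (mult M f e) = mult M phi e" using om_assoc[OF OM ec fc ec] by simp
  also have "mult M (opow M phi k) (mult M phi e) = mult M (mult M (opow M phi k) phi) e"
    using om_assoc[OF OM powc phic ec] by simp
  also have "mult M (opow M phi k) phi = opow M phi (Suc k)" using opow_Suc2[OF OM phic] by simp
  finally show ?thesis unfolding EE_def .
qed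

lemma EE_q: "EE q = e" using qe unfolding EE_def .

lemma EE_mod: "EE k = EE (k mod q)"
proof -
  have "EE (q * j + m) = EE m" for j m
  proof (induction j)
    case 0 thus ?case by simp
  next
    case (Suc j)
    have "EE (q * Suc j + m) = mult M (EE q) (EE (q * j + m))" using EE_add by (simp add: algebra_simps)
    also have "\<dots> = EE (q * j + m)" using EE_q e_EE by simp
    finally show ?case using Suc by simp
  qed
  from this[of "k div q" "k mod q"] show ?thesis by simp
qed

lemma EE_e_iff: "EE k = e \<longleftrightarrow> q dvd k"
proof
  assume "q dvd k" thus "EE k = e" using EE_mod[of k] EE0 by simp
next
  assume k: "EE k = e"
  show "q dvd k"
  proof (rule ccontr)
    assume nd: "\<not> q dvd k"
    hence "k mod q > 0" "\<not> q dvd k mod q" using q1 by (auto simp: dvd_eq_mod_eq_0)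
    hence "EE (k mod q) \<noteq> e" using qn unfolding EE_def by blast
    thus False using k EE_mod[of k] by simp
  qed
qed

lemma EE_le_e: "le M (EE K) e \<longleftrightarrow> EE K = e"
proof
  assume h: "le M (EE K) e"
  have st: "le M (EE (Suc j * K)) (EE K)" for j
  proof (induction j)
    case 0 thus ?case using om_refl[OF OM EEc] by simp
  next
    case (Suc j)
    have "EE (Suc (Suc j) * K) = mult M (EE (Suc j * K)) (EE K)" using EE_add by (simp add: algebra_simps)
    moreover have "le M (mult M (EE (Suc j * K)) (EE K)) (mult M (EE (Suc j * K)) e)"
      by (rule om_monoL[OF OM EEc ec EEc h])
    moreover have "mult M (EE (Suc j * K)) e = EE (Suc j * K)" by (rule EE_e)
    ultimately have "le M (EE (Suc (Suc j) * K)) (EE (Suc j * K))" by simp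
    thus ?case using om_trans[OF OM EEc EEc EEc _ Suc.IH] by blast
  qed
  have "EE (Suc (q - 1) * K) = e" using EE_e_iff q1 by simp
  hence "le M e (EE K)" using st[of "q - 1"] by simp
  thus "EE K = e" using om_antisym[OF OM EEc ec h] by simp
next
  assume "EE K = e" thus "le M (EE K) e" using om_refl[OF OM ec] by simp
qed

definition FF :: "bool \<Rightarrow> 'm" where "FF u = (if u then f else unit M)"
lemma FFc: "FF u \<in> carrier M" unfolding FF_def using fc om_unit[OF OM] by simp

definition A0 :: "bool \<Rightarrow> 'm list" where
  "A0 u = [e, FF u, unit M] @ replicate (q - 1) (FF u) @ concat (replicate (q - 1) [unit M, unit M])"
definition B0 :: "bool \<Rightarrow> 'm list" where
  "B0 v = [unit M, FF v, e] @ replicate (q - 1) e @ concat (replicate (q - 1) [FF v, e])"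

definition bn :: "bool \<Rightarrow> nat" where "bn u = (if u then 1 else 0)"
definition bval :: "bool \<Rightarrow> bool \<Rightarrow> nat" where
  "bval u v = (if u \<or> v then 1 else 0) + (q - 1) * bn u + (q - 1) * bn v"

lemma rep_concat: "replicate n x = concat (replicate n [x])"
  by (induction n) auto

lemma A0_len: "length (A0 u) = 3 * q" unfolding A0_def using q1 by (simp add: length_concat_replicate)
lemma B0_len: "length (B0 u) = 3 * q" unfolding B0_def using q1 by (simp add: length_concat_replicate)

lemma interleave_block: "interleave (A0 u) (B0 v) =
  [e, unit M, FF u, FF v, unit M, e] @ concat (replicate (q - 1) [FF u, e])
   @ concat (replicate (q - 1) [unit M, FF v, unit M, e])"
proof -
  have i1: "interleave (replicate (q - 1) (FF u)) (replicate (q - 1) e) = concat (replicate (q - 1) [FF u, e])"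
    using interleave_replicate[of "[FF u]" "[e]" "q - 1"] by (simp add: rep_concat[symmetric] interleave_def)
  have i2: "interleave (concat (replicate (q - 1) [unit M, unit M])) (concat (replicate (q - 1) [FF v, e]))
      = concat (replicate (q - 1) [unit M, FF v, unit M, e])"
    using interleave_replicate[of "[unit M, unit M]" "[FF v, e]" "q - 1"] by (simp add: interleave_def)
  have "interleave (A0 u) (B0 v) = interleave [e, FF u, unit M] [unit M, FF v, e]
     @ interleave (replicate (q - 1) (FF u) @ concat (replicate (q - 1) [unit M, unit M]))
                  (replicate (q - 1) e @ concat (replicate (q - 1) [FF v, e]))"
    unfolding A0_def B0_def by (rule interleave_append) simp
  also have "\<dots> = interleave [e, FF u, unit M] [unit M, FF v, e]
     @ interleave (replicate (q - 1) (FF u)) (replicate (q - 1) e)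
     @ interleave (concat (replicate (q - 1) [unit M, unit M])) (concat (replicate (q - 1) [FF v, e]))"
    by (subst interleave_append) simp_all
  finally show ?thesis using i1 i2 by (simp add: interleave_def)
qed

lemma EE_rep1: "mult M (EE m) (lprod M (concat (replicate j [FF u, e]))) = EE (m + j * bn u)"
proof (induction j arbitrary: m)
  case 0 thus ?case using om_runit[OF OM EEc] by (simp add: lprod_def)
next
  case (Suc j)
  define R where "R = concat (replicate j [FF u, e])"
  have s: "set R \<subseteq> carrier M" unfolding R_def using FFc ec by (cases "j = 0") auto
  have eq: "concat (replicate (Suc j) [FF u, e]) = [FF u, e] @ R" unfolding R_def by simp
  have X: "lprod M [FF u, e] = mult M (FF u) e" using om_runit[OF OM ec] by (simp add: lprod_def)
  have Xc: "mult M (FF u) e \<in> carrier M" using om_closed[OF OM FFc ec] .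
  have "mult M (EE m) (lprod M (concat (replicate (Suc j) [FF u, e])))
      = mult M (EE m) (mult M (mult M (FF u) e) (lprod M R))"
    unfolding eq using lprod_append[OF OM _ s, of "[FF u, e]"] FFc ec X by simp
  also have "\<dots> = mult M (mult M (EE m) (mult M (FF u) e)) (lprod M R)"
    using om_assoc[OF OM EEc Xc lprod_closed[OF OM s]] by simp
  also have "mult M (EE m) (mult M (FF u) e) = EE (m + bn u)"
    using EE_fe EE_e om_lunit[OF OM ec] unfolding FF_def bn_def by auto
  also have "mult M (EE (m + bn u)) (lprod M R) = EE (m + bn u + j * bn u)"
    unfolding R_def by (rule Suc.IH)
  finally show ?case by (simp add: algebra_simps)
qed

lemma EE_rep2: "mult M (EE m) (lprod M (concat (replicate j [unit M, FF v, unit M, e]))) = EE (m + j * bn v)"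
proof -
  have "lprod M (concat (replicate j [unit M, FF v, unit M, e])) = lprod M (concat (replicate j [FF v, e]))"
  proof -
    have s1: "set [unit M, FF v, unit M, e] \<subseteq> carrier M" "set [FF v, e] \<subseteq> carrier M"
      using FFc ec om_unit[OF OM] by auto
    have "lprod M [unit M, FF v, unit M, e] = lprod M [FF v, e]"
      using om_lunit[OF OM] om_runit[OF OM] FFc ec om_closed[OF OM FFc ec] by (simp add: lprod_def)
    thus ?thesis using lprod_concat_replicate[OF OM s1(1)] lprod_concat_replicate[OF OM s1(2)] by simp
  qed
  thus ?thesis using EE_rep1 by simp
qed

lemma block_prod: "lprod M (interleave (A0 u) (B0 v)) = EE (bval u v)"
proof -
  define w1 where "w1 = [e, unit M, FF u, FF v, unit M, e]"
  define w2 where "w2 = concat (replicate (q - 1) [FF u, e])"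
  define w3 where "w3 = concat (replicate (q - 1) [unit M, FF v, unit M, e])"
  have s1: "set w1 \<subseteq> carrier M" unfolding w1_def using FFc ec om_unit[OF OM] by auto
  have s2: "set w2 \<subseteq> carrier M" unfolding w2_def using FFc ec by (cases "q - 1 = 0") auto
  have s3: "set w3 \<subseteq> carrier M" unfolding w3_def using FFc ec om_unit[OF OM] by (cases "q - 1 = 0") auto
  have "lprod M w1 = mult M e (mult M (FF u) (mult M (FF v) e))"
    unfolding w1_def using om_lunit[OF OM] om_runit[OF OM] FFc ec om_closed[OF OM FFc ec]
      om_closed[OF OM FFc om_closed[OF OM FFc ec]] by (simp add: lprod_def)
  also have "\<dots> = EE (if u \<or> v then 1 else 0)"
  proof -
    have E1: "EE 1 = mult M e (mult M f e)"
      unfolding EE_def using om_runit[OF OM phic] om_assoc[OF OM ec fc ec] by simp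
    show ?thesis
      unfolding FF_def using E1 EE0 ee om_lunit[OF OM ec] om_lunit[OF OM om_closed[OF OM fc ec]]
        om_assoc[OF OM fc fc ec] ff by auto
  qed
  finally have p1: "lprod M w1 = EE (if u \<or> v then 1 else 0)" .
  have "lprod M (interleave (A0 u) (B0 v)) = mult M (lprod M w1) (mult M (lprod M w2) (lprod M w3))"
    unfolding interleave_block w1_def[symmetric] w2_def[symmetric] w3_def[symmetric]
    using lprod_append[OF OM s1, of "w2 @ w3"] lprod_append[OF OM s2 s3] s2 s3 by simp
  also have "\<dots> = mult M (mult M (lprod M w1) (lprod M w2)) (lprod M w3)"
    using om_assoc[OF OM lprod_closed[OF OM s1] lprod_closed[OF OM s2] lprod_closed[OF OM s3]] by simp
  also have "mult M (lprod M w1) (lprod M w2) = EE ((if u \<or> v then 1 else 0) + (q - 1) * bn u)"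
    unfolding p1 w2_def using EE_rep1 by (simp add: mult.commute)
  also have "mult M \<dots> (lprod M w3) = EE (bval u v)"
    unfolding w3_def bval_def using EE_rep2 by (simp add: mult.commute)
  finally show ?thesis .
qed

lemma EE_pow: "opow M (EE k) (Suc j) = EE (Suc j * k)"
proof (induction j)
  case 0 thus ?case using om_runit[OF OM EEc] by simp
next
  case (Suc j)
  have "opow M (EE k) (Suc (Suc j)) = mult M (EE k) (opow M (EE k) (Suc j))" by simp
  thus ?case using Suc EE_add by (simp add: algebra_simps)
qed

lemma Tq_gadget: "\<exists>p L A B. prime p \<and> gadget M {x \<in> carrier M. le M x e} (\<lambda>c. p dvd c) L A B"
proof -
  have qn1: "q \<noteq> 1" using q1 by simp
  obtain p where p: "prime p" "p dvd q" using prime_factor_nat[OF qn1] by blast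
  define r where "r = q div p"
  have r0: "r > 0" unfolding r_def using p q1
    by (metis dvd_div_eq_0_iff not_gr0 not_one_less_zero prime_gt_0_nat zero_less_iff_neq_zero gr_implies_not0 less_one)
  have qr: "q = p * r" unfolding r_def using p by simp
  define A where "A u = concat (replicate r (A0 u))" for u
  define B where "B u = concat (replicate r (B0 u))" for u
  have sA0: "set (A0 u) \<subseteq> carrier M" for u unfolding A0_def using ec FFc om_unit[OF OM] by (cases "q - 1 = 0") auto
  have sB0: "set (B0 u) \<subseteq> carrier M" for u unfolding B0_def using ec FFc om_unit[OF OM] by (cases "q - 1 = 0") auto
  have sA: "set (A u) \<subseteq> carrier M" for u unfolding A_def using sA0 by (cases "r = 0") auto
  have sB: "set (B u) \<subseteq> carrier M" for u unfolding B_def using sB0 by (cases "r = 0") auto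
  have sI: "set (interleave (A u) (B v)) \<subseteq> carrier M" for u v
    using interleave_set[of "A u" "B v"] sA[of u] sB[of v] by blast
  have sI0: "set (interleave (A0 u) (B0 v)) \<subseteq> carrier M" for u v
    using interleave_set[of "A0 u" "B0 v"] sA0[of u] sB0[of v] by blast
  have bp: "lprod M (interleave (A u) (B v)) = EE (r * bval u v)" for u v
  proof -
    have "interleave (A u) (B v) = concat (replicate r (interleave (A0 u) (B0 v)))"
      unfolding A_def B_def by (rule interleave_replicate) (simp add: A0_len B0_len)
    hence "lprod M (interleave (A u) (B v)) = opow M (EE (bval u v)) r"
      using lprod_concat_replicate[OF OM sI0] block_prod by simp
    also have "\<dots> = EE (r * bval u v)" using EE_pow[of "bval u v" "r - 1"] r0 by simp
    finally show ?thesis .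
  qed
  have tot: "ps \<noteq> [] \<Longrightarrow> lprod M (concat (map (\<lambda>(u, v). interleave (A u) (B v)) ps))
      = EE (\<Sum>(u, v)\<leftarrow>ps. r * bval u v)" for ps
  proof (induction ps)
    case Nil thus ?case by simp
  next
    case (Cons z ps)
    obtain u v where z: "z = (u, v)" by (cases z)
    show ?case
    proof (cases "ps = []")
      case True thus ?thesis using bp z om_runit[OF OM EEc] by (simp add: lprod_def)
    next
      case False
      have s2: "set (concat (map (\<lambda>(u, v). interleave (A u) (B v)) ps)) \<subseteq> carrier M" using sI by auto
      have "lprod M (concat (map (\<lambda>(u, v). interleave (A u) (B v)) (z # ps)))
         = mult M (lprod M (interleave (A u) (B v))) (lprod M (concat (map (\<lambda>(u, v). interleave (A u) (B v)) ps)))"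
        unfolding z using lprod_append[OF OM sI s2] by simp
      thus ?thesis using Cons.IH[OF False] bp EE_add z by simp
    qed
  qed
  have cnt_sum: "(\<Sum>(u, v)\<leftarrow>ps. bval u v) + length (filter (\<lambda>(u, v). u \<and> v) ps)
       = q * (\<Sum>(u, v)\<leftarrow>ps. bn u + bn v)" for ps
  proof (induction ps)
    case Nil thus ?case by simp
  next
    case (Cons z ps)
    obtain u v where z: "z = (u, v)" by (cases z)
    have "bval u v + (if u \<and> v then 1 else 0) = q * (bn u + bn v)"
      unfolding bval_def bn_def using q1 by (cases u; cases v) (auto simp: algebra_simps)
    note hb = this
    have L1: "length (filter (\<lambda>(x, y). x \<and> y) (z # ps)) = (if u \<and> v then 1 else 0) + length (filter (\<lambda>(x, y). x \<and> y) ps)"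
      unfolding z by simp
    have L2: "(\<Sum>(x, y)\<leftarrow>z # ps. bval x y) = bval u v + (\<Sum>(x, y)\<leftarrow>ps. bval x y)" unfolding z by simp
    have L3: "(\<Sum>(x, y)\<leftarrow>z # ps. bn x + bn y) = bn u + bn v + (\<Sum>(x, y)\<leftarrow>ps. bn x + bn y)" unfolding z by simp
    have L4: "q * (bn u + bn v + (\<Sum>(x, y)\<leftarrow>ps. bn x + bn y)) = q * (bn u + bn v) + q * (\<Sum>(x, y)\<leftarrow>ps. bn x + bn y)"
      by (simp add: add_mult_distrib2)
    have ar: "\<And>B S I C X Y. B + I = (X::nat) \<Longrightarrow> S + C = Y \<Longrightarrow> B + S + (I + C) = X + Y" by simp
    show ?case unfolding L1 L2 L3 L4 by (rule ar[OF hb Cons.IH])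
  qed
  have sum_r: "(\<Sum>(u, v)\<leftarrow>ps. r * bval u v) = r * (\<Sum>(u, v)\<leftarrow>ps. bval u v)" for ps
    by (induction ps) (auto simp: algebra_simps)
  have key: "q dvd r * (\<Sum>(u, v)\<leftarrow>ps. bval u v) \<longleftrightarrow> p dvd length (filter (\<lambda>(u, v). u \<and> v) ps)" for ps
  proof -
    define X where "X = (\<Sum>(u, v)\<leftarrow>ps. bval u v)"
    define C where "C = length (filter (\<lambda>(u, v). u \<and> v) ps)"
    have "r * X + r * C = q * (r * (\<Sum>(u, v)\<leftarrow>ps. bn u + bn v))"
      using cnt_sum[of ps] unfolding X_def C_def by (metis add_mult_distrib2 mult.left_commute)
    hence d: "q dvd r * X + r * C" by simp
    have "q dvd r * X \<longleftrightarrow> q dvd r * C"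
    proof
      assume "q dvd r * X" thus "q dvd r * C" using d by (simp add: dvd_add_right_iff)
    next
      assume "q dvd r * C" thus "q dvd r * X" using d by (simp add: dvd_add_left_iff)
    qed
    also have "\<dots> \<longleftrightarrow> p dvd C" unfolding qr using r0 by (simp add: mult.commute)
    finally show ?thesis unfolding X_def C_def .
  qed
  have "gadget M {x \<in> carrier M. le M x e} (\<lambda>c. p dvd c) (r * (3 * q)) A B"
    unfolding gadget_def
  proof (intro conjI allI impI)
    show "order_ideal M {x \<in> carrier M. le M x e}" unfolding order_ideal_def
      using om_trans[OF OM _ _ ec] by blast
    show "0 < r * (3 * q)" using r0 q1 by simp
    fix u
    show "length (A u) = r * (3 * q)" "length (B u) = r * (3 * q)"
      unfolding A_def B_def by (simp_all add: length_concat_replicate A0_len B0_len)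
    show "set (A u) \<subseteq> carrier M" "set (B u) \<subseteq> carrier M" using sA sB by blast+
  next
    fix ps :: "(bool \<times> bool) list" assume ne: "ps \<noteq> []"
    have "lprod M (concat (map (\<lambda>(u, v). interleave (A u) (B v)) ps)) \<in> {x \<in> carrier M. le M x e}
        \<longleftrightarrow> le M (EE (\<Sum>(u, v)\<leftarrow>ps. r * bval u v)) e"
      unfolding tot[OF ne] using EEc by simp
    also have "\<dots> \<longleftrightarrow> q dvd r * (\<Sum>(u, v)\<leftarrow>ps. bval u v)" unfolding EE_le_e EE_e_iff sum_r ..
    also have "\<dots> \<longleftrightarrow> p dvd length (filter (\<lambda>(u, v). u \<and> v) ps)" by (rule key)
    finally show "(lprod M (concat (map (\<lambda>(u, v). interleave (A u) (B v)) ps)) \<in> {x \<in> carrier M. le M x e})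
        = (p dvd length (filter (\<lambda>(u, v). u \<and> v) ps))" .
  qed
  thus ?thesis using p by blast
qed

end





theorem mainTheorem14:
  fixes M :: "'m omonoid"
  assumes "ordered_monoid M" and "finite (carrier M)"
    and "(\<exists>q::nat. q > 1 \<and> is_Tq M q)
         \<or> odivides BA2_plus M
         \<or> odivides U_plus M
         \<or> (\<exists>G :: nat omonoid. ordered_monoid G \<and> is_group G \<and> noncommutative G \<and> odivides G M)"
  shows "N1_mon M \<in> \<Omega>(\<lambda>n. real n)"
proof -
  note OM = assms(1) and fin = assms(2)
  from assms(3) show ?thesis
  proof (elim disjE exE conjE)
    fix q :: nat assume q1: "q > 1" and T: "is_Tq M q"
    obtain e f where ef: "e \<in> carrier M" "f \<in> carrier M" "mult M e e = e" "mult M f f = f"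
      "mult M (opow M (mult M e f) q) e = e"
      "\<forall>r::nat. r > 0 \<and> \<not> q dvd r \<longrightarrow> mult M (opow M (mult M e f) r) e \<noteq> e"
      using T unfolding is_Tq_def by blast
    have qn: "\<And>r. r > 0 \<Longrightarrow> \<not> q dvd r \<Longrightarrow> mult M (opow M (mult M e f) r) e \<noteq> e" using ef(6) by blast
    obtain p L A B where "prime p" "gadget M {x \<in> carrier M. le M x e} (\<lambda>c. p dvd c) L A B"
      using Tq_gadget[OF OM ef(1-5) qn q1] by blast
    thus ?thesis using gadget_omega_ip[OF OM fin] by blast
  next
    assume D: "odivides BA2_plus M"
    obtain I' A' B' where "gadget M I' (\<lambda>c. c = 0) 2 A' B'"
      using gadget_divides[OF OM D BA2_gadget] by blast
    thus ?thesis using gadget_omega_disj[OF OM fin] by blast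
  next
    assume D: "odivides U_plus M"
    obtain I' A' B' where "gadget M I' (\<lambda>c. c = 0) 2 A' B'"
      using gadget_divides[OF OM D U_gadget] by blast
    thus ?thesis using gadget_omega_disj[OF OM fin] by blast
  next
    fix G :: "nat omonoid"
    assume G: "ordered_monoid G" "is_group G" "noncommutative G" and D: "odivides G M"
    obtain S h where S: "S \<subseteq> carrier M" "h ` S = carrier G"
      using D unfolding odivides_def by (elim exE conjE) blast
    have finG: "finite (carrier G)" using S fin finite_subset finite_imageI by metis
    obtain p L A B where p: "prime p" and GG: "gadget G {unit G} (\<lambda>c. p dvd c) L A B"
      using group_gadget[OF G(1,2) finG G(3)] by blast
    obtain I' A' B' where "gadget M I' (\<lambda>c. p dvd c) L A' B'"
      using gadget_divides[OF OM D GG] by blast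
    thus ?thesis using gadget_omega_ip[OF OM fin p] by blast
  qed
qed



end
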